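(* Let $a\geq3$ be an odd integer, let $\alpha\in A_{a-2}$, $m\in\mathbb{N}$, and $k\in\{1,2,\dots,a^m-1\}$. Then there exists $N\in\mathbb{N}$ such that the sequence $\{\mathscr{O}_n((\tfrac{k}{a^m},0),\alpha)\}_{n=N}^\infty$, where $\mathscr{O}_n((\tfrac{k}{a^m},0),\alpha)$ is the orbit of the prefractal billiard table $\Omega(S_{a,n})$ with initial condition $((\tfrac{k}{a^m},0),\alpha)$, is a constant sequence of compatible closed orbits.
   Context: Let $Q=[0,1]^2$. For odd $a\geq3$: $S_{a,0}=Q$, and $S_{a,n}$ is obtained from $S_{a,n-1}$ (a union of closed squares of side $a^{-(n-1)}$) by dividing each such square into $a^2$ subsquares of side $a^{-n}$ and removing the open middle one. A peripheral square is the boundary of a removed open square. $A_b=\{\tfrac pq: p+q\leq b,\ 0\leq p<q\leq b-1,\ p,q\in\mathbb{N}\cup\{0\},\ p+q \text{ odd}\}$ for odd $b\geq3$, with the convention $A_1=\{0\}$. The prefractal billiard table $\Omega(S_{a,n})$ is the region $S_{a,n}$ with boundary $\partial S_{a,n}$; the ball moves in straight lines and reflects with angle of reflection equal to angle of incidence. Reflection at corners of $Q$ is well defined (exit direction reflected through the angle bisector); if the ball hits a corner of a peripheral square the trajectory terminates (the orbit is singular). An initial condition $(x^0,\alpha)$ is a boundary point $x^0$ with inward direction of slope $\alpha$; its orbit is the sequence of successive collision points with outgoing directions. An orbit is closed if it consists of finitely many elements (this includes periodic orbits and singular orbits). Initial conditions $(x_n^0,\alpha)$ for $\Omega(S_{a,n})$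 and $(x_{n'}^0,\alpha)$ for $\Omega(S_{a,n'})$, $n>n'$, are compatible if $x_n^0,x_{n'}^0$ lie on a segment of direction $\alpha$ meeting $\partial S_{a,n}$ only at $x_n^0$; a sequence of orbits $\{\mathscr{O}_n\}_{n\geq N}$ with pairwise compatible initial conditions is a sequence of compatible orbits, a sequence of compatible closed orbits if every $\mathscr{O}_n$ is closed, and constant if the path traversed by $\mathscr{O}_{n+1}$ equals the path traversed by $\mathscr{O}_n$ for every $n\geq N$. *)

theory Defs
  imports "HOL-Analysis.Analysis"
begin

type_synonym pt = "real \<times> real"

definition mid :: "nat \<Rightarrow> nat" where
  "mid a = (a - 1) div 2"

text \<open>cells a n: integer coordinates (u,w) of the closed squares of side a^(-n)
  whose union is S_{a,n}; the square with index (u,w) is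
  [u/a^n,(u+1)/a^n] x [w/a^n,(w+1)/a^n].\<close>
fun cells :: "nat \<Rightarrow> nat \<Rightarrow> (nat \<times> nat) set" where
  "cells a 0 = {(0, 0)}"
| "cells a (Suc n) =
     {(a * u + i, a * w + l) | u w i l.
        (u, w) \<in> cells a n \<and> i < a \<and> l < a \<and> (i, l) \<noteq> (mid a, mid a)}"

definition cell_square :: "nat \<Rightarrow> nat \<Rightarrow> nat \<times> nat \<Rightarrow> pt set" where
  "cell_square a n c =
     {real (fst c) / real a ^ n .. (real (fst c) + 1) / real a ^ n} \<times>
     {real (snd c) / real a ^ n .. (real (snd c) + 1) / real a ^ n}"

text \<open>The prefractal S_{a,n} (a union of closed squares; equal to S_{a,n-1} with
  the open middle subsquares removed).\<close>
definition carpet :: "nat \<Rightarrow> nat \<Rightarrow> pt set" where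
  "carpet a n = (\<Union>c\<in>cells a n. cell_square a n c)"

text \<open>The open middle subsquare removed from the cell c of level j (when passing
  to level j+1): lower-left corner coordinates and side.\<close>
definition rm_lo :: "nat \<Rightarrow> nat \<Rightarrow> nat \<Rightarrow> real" where
  "rm_lo a j u = real (a * u + mid a) / real a ^ Suc j"

definition rm_side :: "nat \<Rightarrow> nat \<Rightarrow> real" where
  "rm_side a j = 1 / real a ^ Suc j"

definition removed_square :: "nat \<Rightarrow> nat \<Rightarrow> nat \<times> nat \<Rightarrow> pt set" where
  "removed_square a j c =
     {rm_lo a j (fst c) <..< rm_lo a j (fst c) + rm_side a j} \<times>
     {rm_lo a j (snd c) <..< rm_lo a j (snd c) + rm_side a j}"

definition peripheral_squares :: "nat \<Rightarrow> nat \<Rightarrow> pt set set" where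
  "peripheral_squares a n =
     {frontier (removed_square a j c) | j c. j < n \<and> c \<in> cells a j}"

definition peripheral_corners :: "nat \<Rightarrow> nat \<Rightarrow> pt set" where
  "peripheral_corners a n =
     (\<Union>{ {rm_lo a j (fst c), rm_lo a j (fst c) + rm_side a j} \<times>
          {rm_lo a j (snd c), rm_lo a j (snd c) + rm_side a j} | j c.
          j < n \<and> c \<in> cells a j })"

definition A_set :: "nat \<Rightarrow> real set" where
  "A_set b = (if b = 1 then {0} else
     {real p / real q | p q. p + q \<le> b \<and> p < q \<and> q \<le> b - 1 \<and> odd (p + q)})"

definition Q_corners :: "pt set" where
  "Q_corners = {(0,0), (0,1), (1,0), (1,1)}"

definition hit_time :: "pt set \<Rightarrow> pt set \<Rightarrow> pt \<Rightarrow> pt \<Rightarrow> real" where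
  "hit_time S C x v =
     Inf ({t. 0 < t \<and> x + t *\<^sub>R v \<notin> S} \<union> {t. 0 < t \<and> x + t *\<^sub>R v \<in> C})"

definition vertical_wall :: "pt set \<Rightarrow> pt \<Rightarrow> bool" where
  "vertical_wall S p \<longleftrightarrow>
     (\<exists>e>0. closed_segment p (p + (0, e)) \<subseteq> frontier S \<or>
            closed_segment p (p - (0, e)) \<subseteq> frontier S)"

text \<open>At a corner of Q the exit direction is the reflection of the
  reversed incoming direction through the angle bisector of that corner; at a
  point of a vertical (resp. horizontal) side the angle of reflection equals
  the angle of incidence.\<close>
definition reflect_dir :: "pt set \<Rightarrow> pt \<Rightarrow> pt \<Rightarrow> pt" where
  "reflect_dir S p v =
     (if p = (0,0) \<or> p = (1,1) then (- snd v, - fst v)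
      else if p = (1,0) \<or> p = (0,1) then (snd v, fst v)
      else if vertical_wall S p then (- fst v, snd v)
      else (fst v, - snd v))"

text \<open>When a corner of a peripheral
  square is hit the orbit terminates; we model this by letting the sequence
  stay constant from then on.\<close>
fun orbit_seq :: "nat \<Rightarrow> nat \<Rightarrow> pt \<Rightarrow> pt \<Rightarrow> nat \<Rightarrow> pt \<times> pt" where
  "orbit_seq a n x0 v0 0 = (x0, v0)"
| "orbit_seq a n x0 v0 (Suc j) =
     (let (x, v) = orbit_seq a n x0 v0 j in
      if x \<in> peripheral_corners a n then (x, v)
      else (let p = x + hit_time (carpet a n) (peripheral_corners a n) x v *\<^sub>R v
            in (p, reflect_dir (carpet a n) p v)))"

text \<open>Inward direction of slope alpha at a point of the bottom side of Q.\<close>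
definition dir :: "real \<Rightarrow> pt" where
  "dir \<alpha> = (1, \<alpha>)"

definition orbit :: "nat \<Rightarrow> nat \<Rightarrow> pt \<Rightarrow> real \<Rightarrow> (pt \<times> pt) set" where
  "orbit a n x0 \<alpha> = range (orbit_seq a n x0 (dir \<alpha>))"

definition closed_orbit :: "nat \<Rightarrow> nat \<Rightarrow> pt \<Rightarrow> real \<Rightarrow> bool" where
  "closed_orbit a n x0 \<alpha> \<longleftrightarrow> finite (orbit a n x0 \<alpha>)"

definition orbit_path :: "nat \<Rightarrow> nat \<Rightarrow> pt \<Rightarrow> real \<Rightarrow> pt set" where
  "orbit_path a n x0 \<alpha> =
     (\<Union>j. closed_segment (fst (orbit_seq a n x0 (dir \<alpha>) j))
                          (fst (orbit_seq a n x0 (dir \<alpha>) (Suc j))))"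

definition compatible :: "nat \<Rightarrow> nat \<Rightarrow> pt \<Rightarrow> pt \<Rightarrow> real \<Rightarrow> bool" where
  "compatible a n xn xn' \<alpha> \<longleftrightarrow>
     (\<exists>p q c. q - p = c *\<^sub>R dir \<alpha> \<and>
        xn \<in> closed_segment p q \<and> xn' \<in> closed_segment p q \<and>
        closed_segment p q \<inter> frontier (carpet a n) = {xn})"

definition compatible_closed_seq :: "nat \<Rightarrow> nat \<Rightarrow> (nat \<Rightarrow> pt) \<Rightarrow> real \<Rightarrow> bool" where
  "compatible_closed_seq a N x \<alpha> \<longleftrightarrow>
     (\<forall>n n'. N \<le> n' \<and> n' < n \<longrightarrow> compatible a n (x n) (x n') \<alpha>) \<and>
     (\<forall>n\<ge>N. closed_orbit a n (x n) \<alpha>)"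

definition constant_orbit_seq :: "nat \<Rightarrow> nat \<Rightarrow> (nat \<Rightarrow> pt) \<Rightarrow> real \<Rightarrow> bool" where
  "constant_orbit_seq a N x \<alpha> \<longleftrightarrow>
     (\<forall>n\<ge>N. orbit_path a (Suc n) (x (Suc n)) \<alpha> = orbit_path a n (x n) \<alpha>)"

end

theory Submission
  imports Defs "HOL-Analysis.Analysis"
begin


lemma mid_eq: assumes "odd a" "3 \<le> a" shows "a = 2 * mid a + 1" "1 \<le> mid a" "mid a + 1 < a"
  using assms unfolding mid_def by (auto elim!: oddE)

lemma cells_bound: "c \<in> cells a j \<Longrightarrow> 1 \<le> a \<Longrightarrow> fst c < a ^ j \<and> snd c < a ^ j"
proof (induction j arbitrary: c)
  case 0 then show ?case by simp
next
  case (Suc j)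
  then obtain u w i l where c: "c = (a*u+i, a*w+l)" "(u,w) \<in> cells a j" "i < a" "l < a" by auto
  have "u < a^j" "w < a^j" using Suc.IH[OF c(2)] Suc.prems by auto
  then have "a*u + a \<le> a^Suc j" "a*w + a \<le> a^Suc j"
    by (metis Suc_leI add.commute mult.commute mult_Suc_right mult_le_mono2 power_Suc)+
  then show ?case using c by auto
qed

lemma cells_finite: assumes "1 \<le> a" shows "finite (cells a j)"
proof -
  have "cells a j \<subseteq> {..<a^j} \<times> {..<a^j}" using cells_bound[OF _ assms] by force
  then show ?thesis by (rule finite_subset) auto
qed

lemma cells_Suc_mem: "(u,w) \<in> cells a j \<Longrightarrow> i < a \<Longrightarrow> l < a \<Longrightarrow> (i,l) \<noteq> (mid a, mid a)
   \<Longrightarrow> (a*u+i, a*w+l) \<in> cells a (Suc j)"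
  by auto

definition cmid :: "nat \<Rightarrow> nat \<Rightarrow> nat \<times> nat \<Rightarrow> pt set" where
  "cmid a j c = {rm_lo a j (fst c) .. rm_lo a j (fst c) + rm_side a j} \<times>
                {rm_lo a j (snd c) .. rm_lo a j (snd c) + rm_side a j}"

lemma rm_hi: "a \<ge> 1 \<Longrightarrow> rm_lo a j u + rm_side a j = real (a*u + mid a + 1) / real a ^ Suc j"
  unfolding rm_lo_def rm_side_def by (simp add: add_divide_distrib)

lemma sub_index:
  fixes x :: real
  assumes a: "a \<ge> 1" and lo: "real u / real a ^ j \<le> x" and hi: "x \<le> (real u + 1) / real a ^ j"
  shows "\<exists>i<a. real (a*u+i) / real a ^ Suc j \<le> x \<and> x \<le> real (a*u+i+1) / real a ^ Suc j"
proof -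
  define A where "A = real a ^ Suc j"
  have Apos: "A > 0" using a by (simp add: A_def)
  define y where "y = x * A - real (a*u)"
  have A': "A = real a * real a ^ j" by (simp add: A_def)
  have "real u \<le> x * real a ^ j" using lo a by (simp add: field_simps)
  then have y0: "0 \<le> y" unfolding y_def A' by (simp add: algebra_simps)
     (metis mult.assoc mult.commute mult_left_mono of_nat_0_le_iff)
  have "x * real a ^ j \<le> real u + 1" using hi a by (simp add: field_simps)
  then have "real a * (x * real a ^ j) \<le> real a * (real u + 1)" by (rule mult_left_mono) simp
  then have ya: "y \<le> real a" unfolding y_def A' by (simp add: algebra_simps)
  show ?thesis
  proof (cases "y < real a")
    case True
    define i where "i = nat (floor y)"
    have fi: "real i \<le> y" "y < real i + 1" using y0 unfolding i_def by linarith+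
    have "i < a" using fi True by linarith
    moreover have "real (a*u+i) \<le> x * A" "x * A \<le> real (a*u+i+1)" using fi unfolding y_def by auto
    ultimately show ?thesis using Apos unfolding A_def[symmetric]
      by (intro exI[of _ i]) (simp add: field_simps)
  next
    case False
    then have "y = real a" using ya by simp
    then have "x * A = real (a*u + (a-1) + 1)" using a unfolding y_def by simp
    then show ?thesis using Apos a unfolding A_def[symmetric]
      by (intro exI[of _ "a-1"]) (auto simp: field_simps)
  qed
qed

lemma carpet_Suc_sub: assumes "a \<ge> 1" shows "carpet a (Suc j) \<subseteq> carpet a j"
proof
  fix z assume "z \<in> carpet a (Suc j)"
  then obtain c where c: "c \<in> cells a (Suc j)" "z \<in> cell_square a (Suc j) c" unfolding carpet_def by blast
  have "\<exists>u w i l. c = (a*u+i, a*w+l) \<and> (u,w) \<in> cells a j \<and> i < a \<and> l < a" using c(1) by auto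
  then obtain u w i l where cc: "c = (a*u+i, a*w+l)" "(u,w) \<in> cells a j" "i < a" "l < a" by blast
  have A: "real a ^ Suc j = real a * real a ^ j" by simp
  have ap: "real a > 0" using assms by simp
  have k1: "real u / real a ^ j \<le> real (a*u+i) / real a ^ Suc j" for u i :: nat
    using ap unfolding A by (simp add: field_simps)
  have k2: "real (a*u+i) + 1 \<le> real a * (real u + 1)" if "i < a" for u i :: nat
    using that by (simp add: algebra_simps)
  have k3: "(real (a*u+i) + 1) / real a ^ Suc j \<le> (real u + 1) / real a ^ j" if "i < a" for u i :: nat
  proof -
    have "(real (a*u+i) + 1) / real a \<le> real u + 1" using k2[OF that, of u] ap by (simp add: divide_le_eq algebra_simps)
    then have "(real (a*u+i) + 1) / real a / real a ^ j \<le> (real u + 1) / real a ^ j"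
      by (rule divide_right_mono) simp
    then show ?thesis unfolding A by (simp add: divide_divide_eq_left mult.commute)
  qed
  have "z \<in> cell_square a j (u,w)" using c(2) cc unfolding cell_square_def
    using k1[of u i] k1[of w l] k3[of i u] k3[of l w] by (auto simp del: of_nat_add)
  then show "z \<in> carpet a j" using cc(2) unfolding carpet_def by auto
qed

lemma carpet_Suc_sup:
  assumes "odd a" "3 \<le> a" "z \<in> carpet a j" "\<forall>c\<in>cells a j. z \<notin> cmid a j c"
  shows "z \<in> carpet a (Suc j)"
proof -
  have a1: "a \<ge> 1" using assms by simp
  obtain c where c: "c \<in> cells a j" "z \<in> cell_square a j c" using assms(3) unfolding carpet_def by auto
  obtain u w where uw: "c = (u,w)" by force
  obtain i where i: "i<a" "real (a*u+i) / real a ^ Suc j \<le> fst z" "fst z \<le> real (a*u+i+1) / real a ^ Suc j"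
    using sub_index[OF a1, of u j "fst z"] c(2) uw unfolding cell_square_def by auto
  obtain l where l: "l<a" "real (a*w+l) / real a ^ Suc j \<le> snd z" "snd z \<le> real (a*w+l+1) / real a ^ Suc j"
    using sub_index[OF a1, of w j "snd z"] c(2) uw unfolding cell_square_def by auto
  have "(i,l) \<noteq> (mid a, mid a)"
  proof
    assume "(i,l) = (mid a, mid a)"
    then have "z \<in> cmid a j c" using i l uw unfolding cmid_def rm_hi[OF a1] by (cases z) (auto simp: rm_lo_def)
    then show False using assms(4) c(1) by auto
  qed
  then have "(a*u+i, a*w+l) \<in> cells a (Suc j)" using c(1) uw i l by auto
  moreover have "z \<in> cell_square a (Suc j) (a*u+i, a*w+l)" using i l unfolding cell_square_def
    by (cases z) (simp add: add_ac)
  ultimately show ?thesis unfolding carpet_def by blast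
qed


lemma carpet0: "carpet a 0 = {0..1} \<times> {0..1}"
  unfolding carpet_def cell_square_def by simp

lemma carpet_mono: assumes "a \<ge> 1" "m \<le> n" shows "carpet a n \<subseteq> carpet a m"
  using assms(2)
proof (induction n)
  case 0 then show ?case by simp
next
  case (Suc n)
  show ?case
  proof (cases "m = Suc n")
    case False
    then have "m \<le> n" using Suc.prems by simp
    then show ?thesis using Suc.IH carpet_Suc_sub[OF assms(1), of n] by blast
  qed simp
qed

lemma carpet_Q: "a \<ge> 1 \<Longrightarrow> carpet a n \<subseteq> {0..1} \<times> {0..1}"
  using carpet_mono[of a 0 n] carpet0 by auto

lemma carpet_up:
  assumes "odd a" "3 \<le> a" "z \<in> carpet a m" "m \<le> n"
    "\<forall>j c. m \<le> j \<and> j < n \<and> c \<in> cells a j \<longrightarrow> z \<notin> cmid a j c"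
  shows "z \<in> carpet a n"
  using assms(4,5)
proof (induction n)
  case 0 then show ?case using assms(3) by simp
next
  case (Suc n)
  show ?case
  proof (cases "m = Suc n")
    case True then show ?thesis using assms(3) by simp
  next
    case False
    then have mn: "m \<le> n" using Suc.prems by simp
    then have "z \<in> carpet a n" using Suc by auto
    moreover have "\<forall>c\<in>cells a n. z \<notin> cmid a n c" using Suc.prems(2) mn by blast
    ultimately show ?thesis using carpet_Suc_sup[OF assms(1,2)] by blast
  qed
qed

lemma carpet_closed: assumes "a \<ge> 1" shows "closed (carpet a n)"
  unfolding carpet_def cell_square_def
  by (intro closed_UN cells_finite[OF assms] ballI closed_Times closed_atLeastAtMost)

definition Wl :: "nat \<Rightarrow> nat \<Rightarrow> real set" where
  "Wl a m = {r. \<exists>i::int. r = of_int i / real a ^ m}"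

lemma Wl_not:
  assumes "a \<ge> 1" "x \<notin> Wl a m"
  shows "of_int (floor (x * real a ^ m)) / real a ^ m < x \<and> x < (of_int (floor (x * real a ^ m)) + 1) / real a ^ m"
proof -
  define A where "A = real a ^ m"
  have A: "A > 0" using assms by (simp add: A_def)
  have "x * A \<noteq> of_int (floor (x*A))"
  proof
    assume "x * A = of_int (floor (x*A))"
    then have "x = of_int (floor (x*A)) / A" using A by (simp add: field_simps)
    then show False using assms(2) unfolding Wl_def A_def by auto
  qed
  moreover have "of_int (floor (x*A)) \<le> x * A" "x * A < of_int (floor (x*A)) + 1" by simp_all
  ultimately have "of_int (floor (x*A)) < x * A" "x * A < of_int (floor (x*A)) + 1" by linarith+
  then show ?thesis using A unfolding A_def[symmetric] by (simp add: field_simps)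
qed

lemma Wl_int: "a \<ge> 1 \<Longrightarrow> of_int i / real a ^ m \<in> Wl a m"
  unfolding Wl_def by auto

lemma int_between:
  fixes A x :: real and i :: int and u :: nat
  assumes "A > 0" "of_int i / A < x" "x \<le> (real u + 1)/A" "real u / A \<le> x" "x < (of_int i + 1)/A"
  shows "int u = i"
proof -
  have "of_int i < x * A" "x * A \<le> real u + 1" "real u \<le> x * A" "x * A < of_int i + 1"
    using assms by (simp_all add: field_simps)
  then have "of_int i < real u + 1" "real u < of_int i + 1" by linarith+
  then have "i < int u + 1" "int u < i + 1" by linarith+
  then show ?thesis by simp
qed

definition gbox :: "nat \<Rightarrow> nat \<Rightarrow> int \<Rightarrow> int \<Rightarrow> pt set" where
  "gbox a m i l = {of_int i / real a ^ m <..< (of_int i + 1) / real a ^ m} \<times>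
                  {of_int l / real a ^ m <..< (of_int l + 1) / real a ^ m}"

lemma gbox_open: "open (gbox a m i l)"
  unfolding gbox_def by (intro open_Times open_greaterThanLessThan)

lemma grid:
  assumes "a \<ge> 1"
  shows "gbox a m i l \<subseteq> carpet a m \<or> gbox a m i l \<inter> carpet a m = {}"
proof (cases "gbox a m i l \<inter> carpet a m = {}")
  case False
  then obtain z c where z: "z \<in> gbox a m i l" "c \<in> cells a m" "z \<in> cell_square a m c"
    unfolding carpet_def by blast
  obtain u w where c: "c = (u,w)" by force
  have A: "real a ^ m > 0" using assms by simp
  have "int u = i" using int_between[OF A, of i "fst z" u] z c unfolding gbox_def cell_square_def by auto
  moreover have "int w = l" using int_between[OF A, of l "snd z" w] z c unfolding gbox_def cell_square_def by auto
  ultimately have "gbox a m i l \<subseteq> cell_square a m c" unfolding gbox_def cell_square_def c by auto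
  then show ?thesis using z(2) unfolding carpet_def by blast
qed simp

lemma in_gbox:
  assumes "a \<ge> 1" "fst z \<notin> Wl a m" "snd z \<notin> Wl a m"
  shows "z \<in> gbox a m (floor (fst z * real a ^ m)) (floor (snd z * real a ^ m))"
proof -
  note h1 = Wl_not[OF assms(1,2)] and h2 = Wl_not[OF assms(1,3)]
  show ?thesis unfolding gbox_def mem_Times_iff greaterThanLessThan_iff using h1 h2 by blast
qed

lemma FW:
  assumes "a \<ge> 1" "z \<in> frontier (carpet a m)"
  shows "fst z \<in> Wl a m \<or> snd z \<in> Wl a m"
proof (rule ccontr)
  assume "\<not> ?thesis"
  then have zg: "z \<in> gbox a m (floor (fst z * real a ^ m)) (floor (snd z * real a ^ m))" (is "z \<in> ?G")
    using in_gbox[OF assms(1)] by blast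
  have zc: "z \<in> closure (carpet a m)" "z \<notin> interior (carpet a m)" using assms(2) unfolding frontier_def by auto
  from grid[OF assms(1)] show False
  proof
    assume h: "?G \<subseteq> carpet a m"
    have "interior ?G = ?G" by (rule interior_open[OF gbox_open])
    then have "z \<in> interior (carpet a m)" using zg interior_mono[OF h] by blast
    then show False using zc by blast
  next
    assume "?G \<inter> carpet a m = {}"
    then have "?G \<inter> closure (carpet a m) = {}" unfolding open_Int_closure_eq_empty[OF gbox_open] .
    then show False using zc zg by blast
  qed
qed


lemma seg_vert_mem:
  fixes p :: pt
  assumes "0 \<le> s" "s \<le> e" "0 < e"
  shows "(fst p, snd p + s) \<in> closed_segment p (p + (0,e))"
         "(fst p, snd p - s) \<in> closed_segment p (p - (0,e))"
proof -
  have "(fst p, snd p + s) = (1 - s/e) *\<^sub>R p + (s/e) *\<^sub>R (p + (0,e))"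
    using assms by (cases p) (simp add: field_simps)
  then show "(fst p, snd p + s) \<in> closed_segment p (p + (0,e))"
    unfolding closed_segment_def using assms by (auto intro!: exI[of _ "s/e"])
  have "(fst p, snd p - s) = (1 - s/e) *\<^sub>R p + (s/e) *\<^sub>R (p - (0,e))"
    using assms by (cases p) (simp add: field_simps)
  then show "(fst p, snd p - s) \<in> closed_segment p (p - (0,e))"
    unfolding closed_segment_def using assms by (auto intro!: exI[of _ "s/e"])
qed

lemma seg_vert_char:
  fixes p z :: pt
  assumes "0 \<le> e"
  shows "z \<in> closed_segment p (p + (0,e)) \<Longrightarrow> \<exists>s. 0 \<le> s \<and> s \<le> e \<and> z = (fst p, snd p + s)"
    and "z \<in> closed_segment p (p - (0,e)) \<Longrightarrow> \<exists>s. 0 \<le> s \<and> s \<le> e \<and> z = (fst p, snd p - s)"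
proof -
  assume "z \<in> closed_segment p (p + (0,e))"
  then obtain u where u: "0 \<le> u" "u \<le> 1" "z = (1 - u) *\<^sub>R p + u *\<^sub>R (p + (0,e))"
    unfolding closed_segment_def by auto
  have "z = (fst p, snd p + u * e)" using u(3) by (cases p) (simp add: algebra_simps)
  moreover have "u * e \<le> e" using u assms by (simp add: mult_left_le_one_le)
  ultimately show "\<exists>s. 0 \<le> s \<and> s \<le> e \<and> z = (fst p, snd p + s)" using u assms by auto
next
  assume "z \<in> closed_segment p (p - (0,e))"
  then obtain u where u: "0 \<le> u" "u \<le> 1" "z = (1 - u) *\<^sub>R p + u *\<^sub>R (p - (0,e))"
    unfolding closed_segment_def by auto
  have "z = (fst p, snd p - u * e)" using u(3) by (cases p) (simp add: algebra_simps)
  moreover have "u * e \<le> e" using u assms by (simp add: mult_left_le_one_le)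
  ultimately show "\<exists>s. 0 \<le> s \<and> s \<le> e \<and> z = (fst p, snd p - s)" using u assms by auto
qed

lemma vwall_of_seg:
  assumes "e > 0" "\<forall>s. \<bar>s\<bar> < e \<longrightarrow> (fst p, snd p + s) \<in> frontier S"
  shows "vertical_wall S p"
proof -
  have "closed_segment p (p + (0, e/2)) \<subseteq> frontier S"
  proof
    fix z assume "z \<in> closed_segment p (p + (0, e/2))"
    then obtain s where "0 \<le> s" "s \<le> e/2" "z = (fst p, snd p + s)"
      using seg_vert_char(1)[of "e/2" z p] assms(1) by auto
    then show "z \<in> frontier S" using assms by auto
  qed
  then show ?thesis unfolding vertical_wall_def using assms(1) by (intro exI[of _ "e/2"]) auto
qed

lemma vwall_local:
  assumes "vertical_wall S p" "r > 0" "\<forall>z. dist z p < r \<longrightarrow> (z \<in> frontier S \<longleftrightarrow> z \<in> frontier T)"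
  shows "vertical_wall T p"
proof -
  obtain e where e: "e > 0" "closed_segment p (p + (0, e)) \<subseteq> frontier S \<or>
            closed_segment p (p - (0, e)) \<subseteq> frontier S" using assms(1) unfolding vertical_wall_def by blast
  define e' where "e' = min e (r/2)"
  have e': "e' > 0" "e' \<le> e" "e' < r" using e assms(2) unfolding e'_def by auto
  from e(2) show ?thesis
  proof
    assume h: "closed_segment p (p + (0, e)) \<subseteq> frontier S"
    have "closed_segment p (p + (0, e')) \<subseteq> frontier T"
    proof
      fix z assume "z \<in> closed_segment p (p + (0, e'))"
      then obtain s where s: "0 \<le> s" "s \<le> e'" "z = (fst p, snd p + s)"
        using seg_vert_char(1)[of e' z p] e' by auto
      have "z \<in> closed_segment p (p + (0, e))" using seg_vert_mem(1)[of s e p] s e' by auto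
      then have "z \<in> frontier S" using h by auto
      moreover have "dist z p < r" using s e' by (cases p) (simp add: dist_Pair_Pair dist_real_def)
      ultimately show "z \<in> frontier T" using assms(3) by blast
    qed
    then show ?thesis unfolding vertical_wall_def using e' by blast
  next
    assume h: "closed_segment p (p - (0, e)) \<subseteq> frontier S"
    have "closed_segment p (p - (0, e')) \<subseteq> frontier T"
    proof
      fix z assume "z \<in> closed_segment p (p - (0, e'))"
      then obtain s where s: "0 \<le> s" "s \<le> e'" "z = (fst p, snd p - s)"
        using seg_vert_char(2)[of e' z p] e' by auto
      have "z \<in> closed_segment p (p - (0, e))" using seg_vert_mem(2)[of s e p] s e' by auto
      then have "z \<in> frontier S" using h by auto
      moreover have "dist z p < r" using s e' by (cases p) (simp add: dist_Pair_Pair dist_real_def)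
      ultimately show "z \<in> frontier T" using assms(3) by blast
    qed
    then show ?thesis unfolding vertical_wall_def using e' by blast
  qed
qed

lemma Wl_gap:
  assumes "a \<ge> 1" "of_int l / real a ^ m < y" "y < (of_int l + 1) / real a ^ m"
  shows "y \<notin> Wl a m"
proof
  assume "y \<in> Wl a m"
  then obtain j :: int where j: "y = of_int j / real a ^ m" unfolding Wl_def by auto
  have A: "real a ^ m > 0" using assms(1) by simp
  have "of_int l < (of_int j :: real)" "of_int j < (of_int l + 1 :: real)"
    using assms(2,3) A unfolding j by (simp_all add: field_simps)
  then have "l < j" "j < l + 1" by linarith+
  then show False by simp
qed

lemma half_aux: "(s::real) = M/2 \<Longrightarrow> M \<le> e \<Longrightarrow> M \<le> B \<Longrightarrow> 0 < M \<Longrightarrow> 0 \<le> s \<and> s \<le> e \<and> s < B"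
  by linarith

lemma vwall_Wl:
  assumes "a \<ge> 1" "vertical_wall (carpet a m) p"
  shows "fst p \<in> Wl a m"
proof (rule ccontr)
  assume nW: "fst p \<notin> Wl a m"
  obtain e where e: "e > 0" "closed_segment p (p + (0, e)) \<subseteq> frontier (carpet a m) \<or>
            closed_segment p (p - (0, e)) \<subseteq> frontier (carpet a m)"
    using assms(2) unfolding vertical_wall_def by blast
  have A: "real a ^ m > 0" using assms(1) by simp
  define s where "s = (if snd p \<in> Wl a m then min e (1 / real a ^ m) / 2 else 0)"
  have m1: "min e (1 / real a ^ m) \<le> e" "min e (1 / real a ^ m) \<le> 1 / real a ^ m" "min e (1 / real a ^ m) > 0"
    using e(1) A by auto
  have A1: "1 / real a ^ m > 0" using A by simp
  have s: "0 \<le> s \<and> s \<le> e \<and> s < 1 / real a ^ m"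
  proof (cases "snd p \<in> Wl a m")
    case True then have "s = min e (1 / real a ^ m) / 2" by (simp add: s_def)
    then show ?thesis using half_aux m1 by blast
  next
    case False then have "s = 0" by (simp add: s_def)
    then show ?thesis using e(1) A1 by linarith
  qed
  then have s: "0 \<le> s" "s \<le> e" "s < 1 / real a ^ m" by auto
  have "snd p + s \<notin> Wl a m \<and> snd p - s \<notin> Wl a m"
  proof (cases "snd p \<in> Wl a m")
    case True
    then obtain l :: int where l: "snd p = of_int l / real a ^ m" unfolding Wl_def by auto
    have sp: "s > 0" using True e(1) A unfolding s_def by auto
    have "snd p + s \<notin> Wl a m"
      by (rule Wl_gap[OF assms(1), of l]) (use l sp s A in \<open>auto simp: add_divide_distrib\<close>)
    moreover have "snd p - s \<notin> Wl a m"
      by (rule Wl_gap[OF assms(1), of "l - 1"]) (use l sp s A in \<open>auto simp: diff_divide_distrib\<close>)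
    ultimately show ?thesis by blast
  next
    case False then show ?thesis unfolding s_def by simp
  qed
  moreover from e(2) have "(fst p, snd p + s) \<in> frontier (carpet a m) \<or> (fst p, snd p - s) \<in> frontier (carpet a m)"
    using seg_vert_mem[of s e p] s e(1) by blast
  ultimately show False using FW[OF assms(1)] nW by fastforce
qed


lemma gbox_closure:
  assumes "a \<ge> 1"
  shows "closure (gbox a m i l) = {of_int i / real a ^ m .. (of_int i + 1) / real a ^ m} \<times>
                  {of_int l / real a ^ m .. (of_int l + 1) / real a ^ m}"
proof -
  have A: "real a ^ m > 0" using assms by simp
  have "of_int k / real a ^ m < (of_int k + 1) / real a ^ m" for k :: int
    using A by (simp add: divide_strict_right_mono)
  then show ?thesis unfolding gbox_def closure_Times by simp
qed

lemma FR:
  assumes "z \<in> closure X" "X \<subseteq> S" "z \<in> closure Y" "Y \<inter> S = {}"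
  shows "z \<in> frontier S"
proof -
  have "z \<in> closure S" using assms(1,2) closure_mono by blast
  moreover have "Y \<subseteq> - S" using assms(4) by blast
  then have "closure Y \<subseteq> - interior S" using closure_mono[of Y "- S"] closure_complement by metis
  then have "z \<notin> interior S" using assms(3) by blast
  ultimately show ?thesis unfolding frontier_def by blast
qed

lemma carpet_closure: "a \<ge> 1 \<Longrightarrow> closure (carpet a m) = carpet a m"
  using carpet_closed closure_closed by blast

lemma V_wall:
  assumes a: "a \<ge> 1" and pf: "p \<in> frontier (carpet a m)" and nW: "snd p \<notin> Wl a m"
  shows "fst p \<in> Wl a m \<and> (\<exists>e>0. \<forall>s. \<bar>s\<bar> < e \<longrightarrow> (fst p, snd p + s) \<in> frontier (carpet a m))"
proof -
  let ?S = "carpet a m"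
  define A where "A = real a ^ m"
  have A: "A > 0" using a by (simp add: A_def)
  have pW: "fst p \<in> Wl a m" using FW[OF a pf] nW by blast
  then obtain i :: int where i: "fst p = of_int i / A" unfolding Wl_def A_def by auto
  define l where "l = floor (snd p * A)"
  have l: "of_int l / A < snd p" "snd p < (of_int l + 1) / A" using Wl_not[OF a nW] unfolding l_def A_def by auto
  define GL where "GL = gbox a m (i - 1) l"
  define GR where "GR = gbox a m i l"
  have cGL: "closure GL = {(of_int i - 1) / A .. of_int i / A} \<times> {of_int l / A .. (of_int l + 1) / A}"
    unfolding GL_def gbox_closure[OF a] A_def by simp
  have cGR: "closure GR = {of_int i / A .. (of_int i + 1) / A} \<times> {of_int l / A .. (of_int l + 1) / A}"
    unfolding GR_def gbox_closure[OF a] A_def by simp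
  have GL: "GL = {(of_int i - 1) / A <..< of_int i / A} \<times> {of_int l / A <..< (of_int l + 1) / A}"
    unfolding GL_def gbox_def A_def by simp
  have GR: "GR = {of_int i / A <..< (of_int i + 1) / A} \<times> {of_int l / A <..< (of_int l + 1) / A}"
    unfolding GR_def gbox_def A_def by simp
  have ilt: "(of_int i - 1) / A < of_int i / A" "of_int i / A < (of_int i + 1) / A"
    using A by (simp_all add: divide_strict_right_mono)
  have onl: "(of_int i / A, y) \<in> closure GL \<and> (of_int i / A, y) \<in> closure GR"
    if "of_int l / A < y" "y < (of_int l + 1) / A" for y
    using that ilt unfolding cGL cGR by auto
  have pS: "p \<in> ?S" using pf carpet_closure[OF a] unfolding frontier_def by auto
  have p_eq: "p = (of_int i / A, snd p)" using i by (cases p) auto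
  define e where "e = min (snd p - of_int l / A) ((of_int l + 1) / A - snd p)"
  have e: "e > 0" using l unfolding e_def by auto
  have ye: "of_int l / A < snd p + s \<and> snd p + s < (of_int l + 1) / A" if "\<bar>s\<bar> < e" for s
    using that unfolding e_def by auto
  from grid[OF a, of m "i - 1" l] grid[OF a, of m i l]
  have "(GL \<subseteq> ?S \<and> GR \<inter> ?S = {}) \<or> (GR \<subseteq> ?S \<and> GL \<inter> ?S = {})"
    unfolding GL_def[symmetric] GR_def[symmetric]
  proof (elim disjE)
    assume h1: "GL \<subseteq> ?S" and h2: "GR \<subseteq> ?S"
    define R where "R = {(of_int i - 1) / A <..< (of_int i + 1) / A} \<times> {of_int l / A <..< (of_int l + 1) / A}"
    have oR: "open R" unfolding R_def by (intro open_Times open_greaterThanLessThan)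
    have pR: "p \<in> R" using i l ilt unfolding R_def by (cases p) auto
    have "R \<subseteq> ?S"
    proof
      fix z assume zR: "z \<in> R"
      consider "fst z < of_int i / A" | "fst z > of_int i / A" | "fst z = of_int i / A" by linarith
      then show "z \<in> ?S"
      proof cases
        case 1 then have "z \<in> GL" using zR unfolding GL R_def by (cases z) auto
        then show ?thesis using h1 by blast
      next
        case 2 then have "z \<in> GR" using zR unfolding GR R_def by (cases z) auto
        then show ?thesis using h2 by blast
      next
        case 3 then have "z \<in> closure GL" using zR ilt unfolding cGL R_def by (cases z) auto
        then show ?thesis using closure_mono[OF h1] carpet_closure[OF a] by blast
      qed
    qed
    then have "p \<in> interior ?S" using oR pR interior_maximal interior_open by blast
    then show ?thesis using pf unfolding frontier_def by blast
  next
    assume h1: "GL \<inter> ?S = {}" and h2: "GR \<inter> ?S = {}"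
    obtain c where c: "c \<in> cells a m" "p \<in> cell_square a m c" using pS unfolding carpet_def by blast
    obtain u w where uw: "c = (u,w)" by force
    have cs: "real u / A \<le> fst p" "fst p \<le> (real u + 1) / A" "real w / A \<le> snd p" "snd p \<le> (real w + 1) / A"
      using c(2) unfolding uw cell_square_def A_def by auto
    have wl: "int w = l" using int_between[OF A, of l "snd p" w] cs l by auto
    have "real u \<le> of_int i" "of_int i \<le> real u + 1" using cs(1,2) A unfolding i by (simp_all add: field_simps)
    then have ui: "int u = i \<or> int u = i - 1" by linarith
    define q where "q = ((real u + 1/2) / A, (real w + 1/2) / A)"
    have "q \<in> cell_square a m c" unfolding q_def uw cell_square_def A_def[symmetric] using A
      by (simp add: divide_right_mono)
    then have qS: "q \<in> ?S" using c(1) unfolding carpet_def by blast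
    have qy: "of_int l / A < snd q" "snd q < (of_int l + 1) / A" unfolding q_def using A wl[symmetric]
      by (simp_all add: divide_strict_right_mono)
    have qx: "real u / A < fst q" "fst q < (real u + 1) / A" unfolding q_def using A
      by (simp_all add: divide_strict_right_mono)
    from ui have "q \<in> GL \<or> q \<in> GR"
    proof
      assume "int u = i" then have "real u = of_int i" by (metis of_int_of_nat_eq)
      then show ?thesis using qx qy unfolding GR by (cases q) auto
    next
      assume "int u = i - 1" then have "real u = of_int i - 1" by (metis of_int_of_nat_eq of_int_diff of_int_1)
      then show ?thesis using qx qy unfolding GL by (cases q) auto
    qed
    then show ?thesis using qS h1 h2 by blast
  qed auto
  then have "\<forall>s. \<bar>s\<bar> < e \<longrightarrow> (fst p, snd p + s) \<in> frontier ?S"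
  proof (elim disjE conjE)
    assume h1: "GL \<subseteq> ?S" and h2: "GR \<inter> ?S = {}"
    show ?thesis
    proof (intro allI impI)
      fix s :: real assume "\<bar>s\<bar> < e"
      then have "(of_int i / A, snd p + s) \<in> closure GL \<and> (of_int i / A, snd p + s) \<in> closure GR"
        using onl ye by blast
      then show "(fst p, snd p + s) \<in> frontier ?S" using FR[OF _ h1 _ h2] i by auto
    qed
  next
    assume h1: "GR \<subseteq> ?S" and h2: "GL \<inter> ?S = {}"
    show ?thesis
    proof (intro allI impI)
      fix s :: real assume "\<bar>s\<bar> < e"
      then have "(of_int i / A, snd p + s) \<in> closure GL \<and> (of_int i / A, snd p + s) \<in> closure GR"
        using onl ye by blast
      then show "(fst p, snd p + s) \<in> frontier ?S" using FR[OF _ h1 _ h2] i by auto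
    qed
  qed
  then show ?thesis using pW e by blast
qed

lemma H_wall:
  assumes a: "a \<ge> 1" and pf: "p \<in> frontier (carpet a m)" and nW: "fst p \<notin> Wl a m"
  shows "snd p \<in> Wl a m \<and> (\<exists>e>0. \<forall>s. \<bar>s\<bar> < e \<longrightarrow> (fst p + s, snd p) \<in> frontier (carpet a m))"
proof -
  let ?S = "carpet a m"
  define A where "A = real a ^ m"
  have A: "A > 0" using a by (simp add: A_def)
  have pW: "snd p \<in> Wl a m" using FW[OF a pf] nW by blast
  then obtain i :: int where i: "snd p = of_int i / A" unfolding Wl_def A_def by auto
  define l where "l = floor (fst p * A)"
  have l: "of_int l / A < fst p" "fst p < (of_int l + 1) / A" using Wl_not[OF a nW] unfolding l_def A_def by auto
  define GL where "GL = gbox a m l (i - 1)"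
  define GR where "GR = gbox a m l i"
  have cGL: "closure GL = {of_int l / A .. (of_int l + 1) / A} \<times> {(of_int i - 1) / A .. of_int i / A}"
    unfolding GL_def gbox_closure[OF a] A_def by simp
  have cGR: "closure GR = {of_int l / A .. (of_int l + 1) / A} \<times> {of_int i / A .. (of_int i + 1) / A}"
    unfolding GR_def gbox_closure[OF a] A_def by simp
  have GL: "GL = {of_int l / A <..< (of_int l + 1) / A} \<times> {(of_int i - 1) / A <..< of_int i / A}"
    unfolding GL_def gbox_def A_def by simp
  have GR: "GR = {of_int l / A <..< (of_int l + 1) / A} \<times> {of_int i / A <..< (of_int i + 1) / A}"
    unfolding GR_def gbox_def A_def by simp
  have ilt: "(of_int i - 1) / A < of_int i / A" "of_int i / A < (of_int i + 1) / A"
    using A by (simp_all add: divide_strict_right_mono)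
  have onl: "(y, of_int i / A) \<in> closure GL \<and> (y, of_int i / A) \<in> closure GR"
    if "of_int l / A < y" "y < (of_int l + 1) / A" for y
    using that ilt unfolding cGL cGR by auto
  have pS: "p \<in> ?S" using pf carpet_closure[OF a] unfolding frontier_def by auto
  have p_eq: "p = (fst p, of_int i / A)" using i by (cases p) auto
  define e where "e = min (fst p - of_int l / A) ((of_int l + 1) / A - fst p)"
  have e: "e > 0" using l unfolding e_def by auto
  have ye: "of_int l / A < fst p + s \<and> fst p + s < (of_int l + 1) / A" if "\<bar>s\<bar> < e" for s
    using that unfolding e_def by auto
  from grid[OF a, of m l "i - 1"] grid[OF a, of m l i]
  have "(GL \<subseteq> ?S \<and> GR \<inter> ?S = {}) \<or> (GR \<subseteq> ?S \<and> GL \<inter> ?S = {})"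
    unfolding GL_def[symmetric] GR_def[symmetric]
  proof (elim disjE)
    assume h1: "GL \<subseteq> ?S" and h2: "GR \<subseteq> ?S"
    define R where "R = {of_int l / A <..< (of_int l + 1) / A} \<times> {(of_int i - 1) / A <..< (of_int i + 1) / A}"
    have oR: "open R" unfolding R_def by (intro open_Times open_greaterThanLessThan)
    have pR: "p \<in> R" using i l ilt unfolding R_def by (cases p) auto
    have "R \<subseteq> ?S"
    proof
      fix z assume zR: "z \<in> R"
      consider "snd z < of_int i / A" | "snd z > of_int i / A" | "snd z = of_int i / A" by linarith
      then show "z \<in> ?S"
      proof cases
        case 1 then have "z \<in> GL" using zR unfolding GL R_def by (cases z) auto
        then show ?thesis using h1 by blast
      next
        case 2 then have "z \<in> GR" using zR unfolding GR R_def by (cases z) auto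
        then show ?thesis using h2 by blast
      next
        case 3 then have "z \<in> closure GL" using zR ilt unfolding cGL R_def by (cases z) auto
        then show ?thesis using closure_mono[OF h1] carpet_closure[OF a] by blast
      qed
    qed
    then have "p \<in> interior ?S" using oR pR interior_maximal interior_open by blast
    then show ?thesis using pf unfolding frontier_def by blast
  next
    assume h1: "GL \<inter> ?S = {}" and h2: "GR \<inter> ?S = {}"
    obtain c where c: "c \<in> cells a m" "p \<in> cell_square a m c" using pS unfolding carpet_def by blast
    obtain u w where uw: "c = (u,w)" by force
    have cs: "real u / A \<le> fst p" "fst p \<le> (real u + 1) / A" "real w / A \<le> snd p" "snd p \<le> (real w + 1) / A"
      using c(2) unfolding uw cell_square_def A_def by auto
    have wl: "int u = l" using int_between[OF A, of l "fst p" u] cs l by auto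
    have "real w \<le> of_int i" "of_int i \<le> real w + 1" using cs(3,4) A unfolding i by (simp_all add: field_simps)
    then have ui: "int w = i \<or> int w = i - 1" by linarith
    define q where "q = ((real u + 1/2) / A, (real w + 1/2) / A)"
    have "q \<in> cell_square a m c" unfolding q_def uw cell_square_def A_def[symmetric] using A
      by (simp add: divide_right_mono)
    then have qS: "q \<in> ?S" using c(1) unfolding carpet_def by blast
    have qy: "of_int l / A < fst q" "fst q < (of_int l + 1) / A" unfolding q_def using A wl[symmetric]
      by (simp_all add: divide_strict_right_mono)
    have qx: "real w / A < snd q" "snd q < (real w + 1) / A" unfolding q_def using A
      by (simp_all add: divide_strict_right_mono)
    from ui have "q \<in> GL \<or> q \<in> GR"
    proof
      assume "int w = i" then have "real w = of_int i" by (metis of_int_of_nat_eq)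
      then show ?thesis using qx qy unfolding GR by (cases q) auto
    next
      assume "int w = i - 1" then have "real w = of_int i - 1" by (metis of_int_of_nat_eq of_int_diff of_int_1)
      then show ?thesis using qx qy unfolding GL by (cases q) auto
    qed
    then show ?thesis using qS h1 h2 by blast
  qed auto
  then have "\<forall>s. \<bar>s\<bar> < e \<longrightarrow> (fst p + s, snd p) \<in> frontier ?S"
  proof (elim disjE conjE)
    assume h1: "GL \<subseteq> ?S" and h2: "GR \<inter> ?S = {}"
    show ?thesis
    proof (intro allI impI)
      fix s :: real assume "\<bar>s\<bar> < e"
      then have "(fst p + s, of_int i / A) \<in> closure GL \<and> (fst p + s, of_int i / A) \<in> closure GR"
        using onl ye by blast
      then show "(fst p + s, snd p) \<in> frontier ?S" using FR[OF _ h1 _ h2] i by auto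
    qed
  next
    assume h1: "GR \<subseteq> ?S" and h2: "GL \<inter> ?S = {}"
    show ?thesis
    proof (intro allI impI)
      fix s :: real assume "\<bar>s\<bar> < e"
      then have "(fst p + s, of_int i / A) \<in> closure GL \<and> (fst p + s, of_int i / A) \<in> closure GR"
        using onl ye by blast
      then show "(fst p + s, snd p) \<in> frontier ?S" using FR[OF _ h1 _ h2] i by auto
    qed
  qed
  then show ?thesis using pW e by blast
qed


lemma core:
  fixes X Y :: real and p q mid :: nat and r :: int
  assumes X: "real mid \<le> X" "X \<le> real mid + 1" and Y: "real mid \<le> Y" "Y \<le> real mid + 1"
    and pq: "p + q + 2 \<le> 2*mid + 1" "odd (p+q)"
    and eq: "real q * Y - real p * X = real (2*mid+1) * of_int r \<or> real q * Y + real p * X = real (2*mid+1) * of_int r"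
  shows False
proof -
  have b: "real q * real mid \<le> real q * Y" "real q * Y \<le> real q * (real mid + 1)"
          "real p * real mid \<le> real p * X" "real p * X \<le> real p * (real mid + 1)"
    using X Y by (simp_all add: mult_left_mono)
  define Am where "Am = real (2*mid+1)"
  have Am: "Am = 2 * real mid + 1" unfolding Am_def by simp
  have pqA: "real p + real q + 2 \<le> Am" using pq(1) unfolding Am_def by linarith
  obtain D :: int where D: "real_of_int D * Am \<le> real p + real q" "- (real p + real q) \<le> real_of_int D * Am"
      and Dpar: "D = 2*r - (int q - int p) \<or> D = 2*r - (int q + int p)"
  proof (cases "real q * Y - real p * X = real (2*mid+1) * of_int r")
    case True
    have e1: "real_of_int (2*r - (int q - int p)) * Am = 2 * (Am * of_int r) - (real q - real p) * (2 * real mid + 1)"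
      unfolding Am by (simp add: algebra_simps)
    have "real_of_int (2*r - (int q - int p)) * Am \<le> real p + real q"
         "- (real p + real q) \<le> real_of_int (2*r - (int q - int p)) * Am"
      using True b unfolding e1 Am_def[symmetric] by (simp_all add: algebra_simps)
    then show ?thesis using that by blast
  next
    case False
    then have True': "real q * Y + real p * X = real (2*mid+1) * of_int r" using eq by blast
    have e1: "real_of_int (2*r - (int q + int p)) * Am = 2 * (Am * of_int r) - (real q + real p) * (2 * real mid + 1)"
      unfolding Am by (simp add: algebra_simps)
    have "real_of_int (2*r - (int q + int p)) * Am \<le> real p + real q"
         "- (real p + real q) \<le> real_of_int (2*r - (int q + int p)) * Am"
      using True' b unfolding e1 Am_def[symmetric] by (simp_all add: algebra_simps)
    then show ?thesis using that by blast
  qed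
  have "D = 0"
  proof (rule ccontr)
    assume "D \<noteq> 0"
    then have "D \<ge> 1 \<or> D \<le> -1" by linarith
    then show False
    proof
      assume "D \<ge> 1"
      then have "real_of_int D * Am \<ge> 1 * Am" using pqA by (intro mult_right_mono) simp_all
      then show False using D pqA by linarith
    next
      assume "D \<le> -1"
      then have "real_of_int D * Am \<le> (-1) * Am" using pqA by (intro mult_right_mono) simp_all
      then show False using D pqA by linarith
    qed
  qed
  then show False using Dpar pq(2) by presburger
qed

definition Dset :: "real \<Rightarrow> pt set" where
  "Dset \<alpha> = {(1,\<alpha>),(-1,\<alpha>),(1,-\<alpha>),(-1,-\<alpha>),(\<alpha>,1),(-\<alpha>,1),(\<alpha>,-1),(-\<alpha>,-1)}"

lemma Dset_finite: "finite (Dset \<alpha>)" unfolding Dset_def by simp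

lemma dir_rel:
  fixes p q :: nat and t :: real
  assumes "q \<ge> 1" "v \<in> Dset (real p / real q)"
  shows "(\<exists>\<epsilon>::real. (\<epsilon> = 1 \<or> \<epsilon> = -1) \<and> real q * (t * snd v) = \<epsilon> * real p * (t * fst v)) \<or>
         (\<exists>\<epsilon>::real. (\<epsilon> = 1 \<or> \<epsilon> = -1) \<and> real q * (t * fst v) = \<epsilon> * real p * (t * snd v))"
proof -
  have q: "real q \<noteq> 0" using assms(1) by simp
  define \<alpha> where "\<alpha> = real p / real q"
  have qa: "real q * \<alpha> = real p" unfolding \<alpha>_def using q by simp
  from assms(2) consider "v=(1,\<alpha>)" | "v=(-1,\<alpha>)" | "v=(1,-\<alpha>)" | "v=(-1,-\<alpha>)"
     | "v=(\<alpha>,1)" | "v=(-\<alpha>,1)" | "v=(\<alpha>,-1)" | "v=(-\<alpha>,-1)"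
    unfolding Dset_def \<alpha>_def[symmetric] by blast
  then show ?thesis
  proof cases
    case 1 then show ?thesis by (intro disjI1 exI[of _ 1]) (simp add: qa[symmetric])
  next
    case 2 then show ?thesis by (intro disjI1 exI[of _ "-1"]) (simp add: qa[symmetric])
  next
    case 3 then show ?thesis by (intro disjI1 exI[of _ "-1"]) (simp add: qa[symmetric])
  next
    case 4 then show ?thesis by (intro disjI1 exI[of _ 1]) (simp add: qa[symmetric])
  next
    case 5 then show ?thesis by (intro disjI2 exI[of _ 1]) (simp add: qa[symmetric])
  next
    case 6 then show ?thesis by (intro disjI2 exI[of _ "-1"]) (simp add: qa[symmetric])
  next
    case 7 then show ?thesis by (intro disjI2 exI[of _ "-1"]) (simp add: qa[symmetric])
  next
    case 8 then show ?thesis by (intro disjI2 exI[of _ 1]) (simp add: qa[symmetric])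
  qed
qed


lemma KLaux:
  fixes X Y \<epsilon> :: real and p q mid u w En :: nat and i1 i2 :: int
  assumes X: "real mid \<le> X" "X \<le> real mid + 1" and Y: "real mid \<le> Y" "Y \<le> real mid + 1"
    and pq: "p + q + 2 \<le> 2*mid + 1" "odd (p+q)" and am: "a = 2*mid+1"
    and e: "\<epsilon> = 1 \<or> \<epsilon> = -1"
    and rel: "real q * (Y + real a * real w - real a * of_int i2 * real En) =
              \<epsilon> * real p * (X + real a * real u - real a * of_int i1 * real En)"
  shows False
  using e
proof
  assume e1: "\<epsilon> = 1"
  define r where "r = int p * int u - int p * i1 * int En - int q * int w + int q * i2 * int En"
  have "real q * Y - real p * X = real (2*mid+1) * of_int r"
    using rel unfolding e1 r_def am[symmetric] by (simp add: algebra_simps)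
  then show False using core[OF X Y pq] by blast
next
  assume e1: "\<epsilon> = -1"
  define r where "r = - int p * int u + int p * i1 * int En - int q * int w + int q * i2 * int En"
  have "real q * Y + real p * X = real (2*mid+1) * of_int r"
    using rel unfolding e1 r_def am[symmetric] by (simp add: algebra_simps)
  then show False using core[OF X Y pq] by blast
qed

lemma KL:
  fixes p q :: nat
  assumes a: "odd a" "3 \<le> a" and q: "q \<ge> 1" and pq: "p + q + 2 \<le> a" "odd (p+q)"
    and v: "v \<in> Dset (real p / real q)" and g: "g1 \<in> Wl a m" "g2 \<in> Wl a m" and j: "m \<le> j"
  shows "(g1 + t * fst v, g2 + t * snd v) \<notin> cmid a j c"
proof
  assume zin: "(g1 + t * fst v, g2 + t * snd v) \<in> cmid a j c"
  obtain u w where c: "c = (u,w)" by force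
  have a1: "a \<ge> 1" using a by simp
  note am = mid_eq[OF a]
  define mi where "mi = mid a"
  have pq': "p + q + 2 \<le> 2*mi + 1" using pq am unfolding mi_def by simp
  obtain i1 :: int where i1: "g1 = of_int i1 / real a ^ m" using g(1) unfolding Wl_def by auto
  obtain i2 :: int where i2: "g2 = of_int i2 / real a ^ m" using g(2) unfolding Wl_def by auto
  define En where "En = a ^ (j - m)"
  define A where "A = real a ^ Suc j"
  have A: "A > 0" using a1 unfolding A_def by simp
  have Am: "A = real a ^ m * (real a * real En)"
  proof -
    have "Suc j = m + Suc (j - m)" using j by simp
    then have "real a ^ Suc j = real a ^ m * real a ^ Suc (j - m)" by (metis power_add)
    then show ?thesis unfolding A_def En_def by simp
  qed
  have am0: "real a ^ m > 0" using a1 by simp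
  have g1A: "g1 * A = real a * of_int i1 * real En" unfolding i1 Am using am0 by (simp add: field_simps)
  have g2A: "g2 * A = real a * of_int i2 * real En" unfolding i2 Am using am0 by (simp add: field_simps)
  define z1 where "z1 = g1 + t * fst v"
  define z2 where "z2 = g2 + t * snd v"
  define X where "X = z1 * A - real a * real u"
  define Y where "Y = z2 * A - real a * real w"
  have zb: "real (a*u + mi) / A \<le> z1" "z1 \<le> real (a*u + mi + 1) / A"
           "real (a*w + mi) / A \<le> z2" "z2 \<le> real (a*w + mi + 1) / A"
    using zin unfolding c cmid_def rm_hi[OF a1] z1_def[symmetric] z2_def[symmetric] A_def[symmetric] mi_def
    by (auto simp: rm_lo_def A_def)
  have X: "real mi \<le> X" "X \<le> real mi + 1" using zb(1,2) A unfolding X_def by (simp_all add: field_simps)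
  have Y: "real mi \<le> Y" "Y \<le> real mi + 1" using zb(3,4) A unfolding Y_def by (simp_all add: field_simps)
  have z1A: "z1 * A = X + real a * real u" unfolding X_def by simp
  have z2A: "z2 * A = Y + real a * real w" unfolding Y_def by simp
  from dir_rel[OF q v, of t] show False
  proof (elim disjE exE)
    fix \<epsilon> :: real assume h: "(\<epsilon> = 1 \<or> \<epsilon> = -1) \<and> real q * (t * snd v) = \<epsilon> * real p * (t * fst v)"
    then have e: "\<epsilon> = 1 \<or> \<epsilon> = -1" and r: "real q * (t * snd v) = \<epsilon> * real p * (t * fst v)" by auto
    have "real q * (z2 - g2) = \<epsilon> * real p * (z1 - g1)" using r unfolding z1_def z2_def by simp
    then have "real q * (z2 * A - g2 * A) = \<epsilon> * real p * (z1 * A - g1 * A)"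
      by (metis (no_types, opaque_lifting) left_diff_distrib mult.assoc)
    then have "real q * (Y + real a * real w - real a * of_int i2 * real En) =
              \<epsilon> * real p * (X + real a * real u - real a * of_int i1 * real En)"
      unfolding z1A z2A g1A g2A by simp
    then show False using KLaux[OF X Y pq'(1) pq(2) am(1)[folded mi_def] e] by blast
  next
    fix \<epsilon> :: real assume h: "(\<epsilon> = 1 \<or> \<epsilon> = -1) \<and> real q * (t * fst v) = \<epsilon> * real p * (t * snd v)"
    then have e: "\<epsilon> = 1 \<or> \<epsilon> = -1" and r: "real q * (t * fst v) = \<epsilon> * real p * (t * snd v)" by auto
    have "real q * (z1 - g1) = \<epsilon> * real p * (z2 - g2)" using r unfolding z1_def z2_def by simp
    then have "real q * (z1 * A - g1 * A) = \<epsilon> * real p * (z2 * A - g2 * A)"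
      by (metis (no_types, opaque_lifting) left_diff_distrib mult.assoc)
    then have "real q * (X + real a * real u - real a * of_int i1 * real En) =
              \<epsilon> * real p * (Y + real a * real w - real a * of_int i2 * real En)"
      unfolding z1A z2A g1A g2A by simp
    then show False using KLaux[OF Y X pq'(1) pq(2) am(1)[folded mi_def] e] by blast
  qed
qed


lemma frontier_local:
  assumes "open B" "z \<in> B" "S \<inter> B = T \<inter> B"
  shows "z \<in> frontier S \<longleftrightarrow> z \<in> frontier T"
proof -
  have cl: "z \<in> closure X \<longleftrightarrow> z \<in> closure (X \<inter> B)" for X
  proof
    assume "z \<in> closure X"
    then have "z \<in> B \<inter> closure X" using assms(2) by blast
    then have "z \<in> closure (B \<inter> X)" using open_Int_closure_subset[OF assms(1), of X] by blast
    moreover have "B \<inter> X = X \<inter> B" by blast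
    ultimately show "z \<in> closure (X \<inter> B)" by simp
  next
    assume "z \<in> closure (X \<inter> B)"
    then show "z \<in> closure X" using closure_mono[of "X \<inter> B" X] by blast
  qed
  have int: "z \<in> interior X \<longleftrightarrow> z \<in> interior (X \<inter> B)" for X
    using assms(1,2) by (simp add: interior_open)
  have "z \<in> frontier S \<longleftrightarrow> z \<in> closure (S \<inter> B) \<and> z \<notin> interior (S \<inter> B)"
    unfolding frontier_def using cl int by blast
  also have "\<dots> \<longleftrightarrow> z \<in> closure (T \<inter> B) \<and> z \<notin> interior (T \<inter> B)" unfolding assms(3) ..
  also have "\<dots> \<longleftrightarrow> z \<in> frontier T"
    unfolding frontier_def using cl int by blast
  finally show ?thesis .
qed

locale setting =
  fixes a m p q :: nat
  assumes odd_a: "odd a" and a3: "3 \<le> a" and q1: "q \<ge> 1" and pq: "p + q + 2 \<le> a" and pqodd: "odd (p+q)"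
begin

abbreviation "\<alpha> \<equiv> real p / real q"

lemma a1: "a \<ge> 1" using a3 by simp

definition good :: "pt \<Rightarrow> pt \<Rightarrow> bool" where
  "good x v \<longleftrightarrow> v \<in> Dset \<alpha> \<and> (\<exists>g1\<in>Wl a m. \<exists>g2\<in>Wl a m. \<exists>t. x = (g1 + t * fst v, g2 + t * snd v))"

lemma good_move: assumes "good x v" shows "good (x + s *\<^sub>R v) v"
proof -
  obtain g1 g2 t where g: "g1 \<in> Wl a m" "g2 \<in> Wl a m" "x = (g1 + t * fst v, g2 + t * snd v)" and v: "v \<in> Dset \<alpha>"
    using assms(1) unfolding good_def by blast
  have "x + s *\<^sub>R v = (g1 + (t + s) * fst v, g2 + (t + s) * snd v)"
    using g(3) by (cases v) (simp add: algebra_simps)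
  then show ?thesis unfolding good_def using g(1,2) v by blast
qed

lemma good_cmid: assumes "good x v" "m \<le> j" shows "x \<notin> cmid a j c"
proof -
  obtain g1 g2 t where g: "g1 \<in> Wl a m" "g2 \<in> Wl a m" "x = (g1 + t * fst v, g2 + t * snd v)" and v: "v \<in> Dset \<alpha>"
    using assms(1) unfolding good_def by blast
  show ?thesis using KL[OF odd_a a3 q1 pq pqodd v g(1,2) assms(2)] g(3) by simp
qed

lemma carpet_eq_local:
  assumes "m \<le> n" "\<forall>j c. m \<le> j \<and> j < n \<and> c \<in> cells a j \<longrightarrow> z \<notin> cmid a j c"
  shows "z \<in> carpet a n \<longleftrightarrow> z \<in> carpet a m"
  using carpet_mono[OF a1 assms(1)] carpet_up[OF odd_a a3 _ assms(1,2)] by blast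

lemma good_carpet: "good x v \<Longrightarrow> m \<le> n \<Longrightarrow> x \<in> carpet a n \<longleftrightarrow> x \<in> carpet a m"
  using carpet_eq_local good_cmid by blast

lemma pc_eq: "peripheral_corners a n = (\<Union>j<n. \<Union>c\<in>cells a j.
     {rm_lo a j (fst c), rm_lo a j (fst c) + rm_side a j} \<times> {rm_lo a j (snd c), rm_lo a j (snd c) + rm_side a j})"
  unfolding peripheral_corners_def by blast

lemma pc_finite: "finite (peripheral_corners a n)"
  unfolding pc_eq using cells_finite[OF a1] by auto

lemma corner_in_cmid: "z \<in> {rm_lo a j (fst c), rm_lo a j (fst c) + rm_side a j} \<times> {rm_lo a j (snd c), rm_lo a j (snd c) + rm_side a j}
   \<Longrightarrow> z \<in> cmid a j c"
  unfolding cmid_def rm_side_def by auto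

lemma good_pc: assumes "good x v" "m \<le> n" shows "x \<in> peripheral_corners a n \<longleftrightarrow> x \<in> peripheral_corners a m"
proof -
  have "x \<in> peripheral_corners a n \<Longrightarrow> x \<in> peripheral_corners a m"
  proof -
    assume "x \<in> peripheral_corners a n"
    then obtain j c where jc: "j < n" "c \<in> cells a j" "x \<in> {rm_lo a j (fst c), rm_lo a j (fst c) + rm_side a j} \<times> {rm_lo a j (snd c), rm_lo a j (snd c) + rm_side a j}"
      unfolding pc_eq by blast
    have "j < m"
    proof (rule ccontr)
      assume "\<not> j < m" then have mj: "m \<le> j" by simp
      show False using good_cmid[OF assms(1) mj] corner_in_cmid[OF jc(3)] by blast
    qed
    then show ?thesis using jc unfolding pc_eq by blast
  qed
  moreover have "x \<in> peripheral_corners a m \<Longrightarrow> x \<in> peripheral_corners a n"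
    using assms(2) unfolding pc_eq by auto
  ultimately show ?thesis by blast
qed

lemma good_vwall: assumes "good x v" "m \<le> n"
  shows "vertical_wall (carpet a n) x \<longleftrightarrow> vertical_wall (carpet a m) x"
proof -
  define U where "U = (\<Union>j\<in>{m..<n}. \<Union>c\<in>cells a j. cmid a j c)"
  have cc: "closed (cmid a j c)" for j c unfolding cmid_def by (intro closed_Times closed_atLeastAtMost)
  have cj: "closed (\<Union>c\<in>cells a j. cmid a j c)" for j
    by (rule closed_UN[OF cells_finite[OF a1]]) (use cc in blast)
  have "closed U" unfolding U_def
    by (rule closed_UN[OF finite_atLeastLessThan]) (use cj in blast)
  moreover have "x \<notin> U" unfolding U_def using good_cmid[OF assms(1)] by auto
  ultimately obtain r where r: "r > 0" "ball x r \<subseteq> - U"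
    using open_contains_ball[of "- U"] by (auto simp: open_Compl)
  have eq: "carpet a n \<inter> ball x r = carpet a m \<inter> ball x r"
  proof -
    have "z \<in> carpet a n \<longleftrightarrow> z \<in> carpet a m" if "z \<in> ball x r" for z
      by (rule carpet_eq_local[OF assms(2)]) (use that r(2) in \<open>auto simp: U_def\<close>)
    then show ?thesis by blast
  qed
  have fr: "\<forall>z. dist z x < r \<longrightarrow> (z \<in> frontier (carpet a n) \<longleftrightarrow> z \<in> frontier (carpet a m))"
    using frontier_local[OF open_ball _ eq] by (simp add: dist_commute)
  have fr': "\<forall>z. dist z x < r \<longrightarrow> (z \<in> frontier (carpet a m) \<longleftrightarrow> z \<in> frontier (carpet a n))"
    using fr by blast
  show ?thesis
  proof
    assume h: "vertical_wall (carpet a n) x" show "vertical_wall (carpet a m) x" by (rule vwall_local[OF h r(1) fr])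
  next
    assume h: "vertical_wall (carpet a m) x" show "vertical_wall (carpet a n) x" by (rule vwall_local[OF h r(1) fr'])
  qed
qed

definition step :: "nat \<Rightarrow> pt \<times> pt \<Rightarrow> pt \<times> pt" where
  "step n s = (let (x, v) = s in
      if x \<in> peripheral_corners a n then (x, v)
      else (let p = x + hit_time (carpet a n) (peripheral_corners a n) x v *\<^sub>R v
            in (p, reflect_dir (carpet a n) p v)))"

lemma orbit_step: "orbit_seq a n x0 v0 (Suc j) = step n (orbit_seq a n x0 v0 j)"
  by (simp only: orbit_seq.simps(2) step_def)

lemma step_eq: assumes "good x v" "m \<le> n" shows "step n (x, v) = step m (x, v)"
proof -
  have T1: "{t. 0 < t \<and> x + t *\<^sub>R v \<notin> carpet a n} = {t. 0 < t \<and> x + t *\<^sub>R v \<notin> carpet a m}"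
    using good_carpet[OF good_move[OF assms(1)] assms(2)] by blast
  have T2: "{t. 0 < t \<and> x + t *\<^sub>R v \<in> peripheral_corners a n} = {t. 0 < t \<and> x + t *\<^sub>R v \<in> peripheral_corners a m}"
    using good_pc[OF good_move[OF assms(1)] assms(2)] by blast
  have h: "hit_time (carpet a n) (peripheral_corners a n) x v = hit_time (carpet a m) (peripheral_corners a m) x v"
    unfolding hit_time_def T1 T2 ..
  define pp where "pp = x + hit_time (carpet a m) (peripheral_corners a m) x v *\<^sub>R v"
  have vw: "vertical_wall (carpet a n) pp \<longleftrightarrow> vertical_wall (carpet a m) pp"
    unfolding pp_def by (rule good_vwall[OF good_move[OF assms(1)] assms(2)])
  have "reflect_dir (carpet a n) pp v = reflect_dir (carpet a m) pp v"
    unfolding reflect_dir_def vw ..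
  moreover have "x \<in> peripheral_corners a n \<longleftrightarrow> x \<in> peripheral_corners a m" by (rule good_pc[OF assms])
  ultimately show ?thesis unfolding step_def Let_def prod.case h pp_def[symmetric] by simp
qed

end


lemma hit:
  fixes S C :: "pt set" and x v :: pt
  assumes S: "closed S" and xS: "x \<in> S" and C: "finite C" and v: "v \<noteq> 0"
    and ne: "x + 2 *\<^sub>R v \<notin> S"
  defines "h \<equiv> hit_time S C x v"
  shows "h \<ge> 0" "x + h *\<^sub>R v \<in> S" "x + h *\<^sub>R v \<in> C \<or> (\<forall>e>0. \<exists>t. h < t \<and> t < h + e \<and> x + t *\<^sub>R v \<notin> S)"
proof -
  define T1 where "T1 = {t. 0 < t \<and> x + t *\<^sub>R v \<notin> S}"
  define T2 where "T2 = {t. 0 < t \<and> x + t *\<^sub>R v \<in> C}"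
  define T where "T = T1 \<union> T2"
  have hT: "h = Inf T" unfolding h_def hit_time_def T_def T1_def T2_def ..
  have Tne: "T \<noteq> {}" using ne unfolding T_def T1_def by (auto intro!: exI[of _ 2])
  have Tb: "bdd_below T" unfolding T_def T1_def T2_def bdd_below_def by (auto intro!: exI[of _ 0])
  have Tpos: "t \<in> T \<Longrightarrow> 0 < t" for t unfolding T_def T1_def T2_def by auto
  show h0: "h \<ge> 0" unfolding hT by (rule cInf_greatest[OF Tne]) (simp add: Tpos less_imp_le)
  have below: "x + t *\<^sub>R v \<in> S" if "0 < t" "t < h" for t
  proof (rule ccontr)
    assume "x + t *\<^sub>R v \<notin> S"
    then have "t \<in> T" unfolding T_def T1_def using that by auto
    then have "h \<le> t" unfolding hT by (rule cInf_lower[OF _ Tb])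
    then show False using that by simp
  qed
  show pS: "x + h *\<^sub>R v \<in> S"
  proof (cases "h = 0")
    case True then show ?thesis using xS by simp
  next
    case False
    then have hp: "h > 0" using h0 by simp
    define f where "f = (\<lambda>t::real. x + t *\<^sub>R v)"
    have "f ` {0<..<h} \<subseteq> S" unfolding f_def using below by auto
    moreover have "continuous_on (closure {0<..<h}) f" unfolding f_def by (intro continuous_intros)
    ultimately have "f ` closure {0<..<h} \<subseteq> S" using image_closure_subset[OF _ S] by blast
    moreover have "h \<in> closure {0<..<h}" using hp by simp
    ultimately show ?thesis unfolding f_def by blast
  qed
  have T2fin: "finite T2"
  proof -
    have "inj (\<lambda>t::real. x + t *\<^sub>R v)" unfolding inj_def using v by (simp add: scaleR_cancel_right)
    then have "finite ((\<lambda>t::real. x + t *\<^sub>R v) -` C)" using finite_vimageI[OF C] by blast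
    moreover have "T2 \<subseteq> (\<lambda>t::real. x + t *\<^sub>R v) -` C" unfolding T2_def by auto
    ultimately show ?thesis by (rule finite_subset[rotated])
  qed
  show "x + h *\<^sub>R v \<in> C \<or> (\<forall>e>0. \<exists>t. h < t \<and> t < h + e \<and> x + t *\<^sub>R v \<notin> S)"
  proof (cases "x + h *\<^sub>R v \<in> C")
    case False
    have hT1: "h \<notin> T1" using pS unfolding T1_def by auto
    have hT2: "h \<notin> T2" using False unfolding T2_def by auto
    have "\<forall>e>0. \<exists>t. h < t \<and> t < h + e \<and> x + t *\<^sub>R v \<notin> S"
    proof (intro allI impI)
      fix e :: real assume e: "e > 0"
      define T2' where "T2' = {t\<in>T2. h < t}"
      have fin: "finite T2'" unfolding T2'_def using T2fin by simp
      define d where "d = (if T2' = {} then e else min e (Min T2' - h))"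
      have d: "d > 0" "d \<le> e" "\<And>t. t \<in> T2' \<Longrightarrow> h + d \<le> t"
      proof -
        show "d > 0"
        proof (cases "T2' = {}")
          case False
          have "Min T2' \<in> T2'" using Min_in[OF fin False] .
          then have "Min T2' > h" unfolding T2'_def by auto
          then show ?thesis unfolding d_def using e False by simp
        qed (simp add: d_def e)
        show "d \<le> e" unfolding d_def by simp
        fix t assume t: "t \<in> T2'"
        then have ne': "T2' \<noteq> {}" by auto
        have "Min T2' \<le> t" using Min_le[OF fin t] .
        then show "h + d \<le> t" unfolding d_def using ne' by simp
      qed
      have "Inf T < h + d" using hT d(1) by simp
      then obtain t where t: "t \<in> T" "t < h + d" using cInf_less_iff[OF Tne Tb] by blast
      have "h \<le> t" unfolding hT by (rule cInf_lower[OF t(1) Tb])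
      moreover have "t \<noteq> h" using t(1) hT1 hT2 unfolding T_def by auto
      ultimately have ht: "h < t" by simp
      have "t \<notin> T2"
      proof
        assume "t \<in> T2" then have "t \<in> T2'" unfolding T2'_def using ht by simp
        then show False using d(3) t(2) by fastforce
      qed
      then have "t \<in> T1" using t(1) unfolding T_def by blast
      then show "\<exists>t. h < t \<and> t < h + e \<and> x + t *\<^sub>R v \<notin> S"
        using ht t(2) d(2) unfolding T1_def by (intro exI[of _ t]) auto
    qed
    then show ?thesis by blast
  qed simp
qed

lemma hit_frontier:
  fixes S :: "pt set" and x v :: pt
  assumes "closed S" "v \<noteq> 0" "x + h *\<^sub>R v \<in> S" "\<forall>e>0. \<exists>t. h < t \<and> t < h + e \<and> x + t *\<^sub>R v \<notin> S"
  shows "x + h *\<^sub>R v \<in> frontier S"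
proof -
  have "x + h *\<^sub>R v \<notin> interior S"
  proof
    assume "x + h *\<^sub>R v \<in> interior S"
    moreover have "open (interior S)" by simp
    ultimately obtain r where r0: "r > 0" "ball (x + h *\<^sub>R v) r \<subseteq> interior S"
      unfolding open_contains_ball by blast
    have r: "r > 0" "ball (x + h *\<^sub>R v) r \<subseteq> S" using r0 interior_subset[of S] by auto
    have nv: "norm v > 0" using assms(2) by simp
    have rv: "r / norm v > 0" using r(1) nv by simp
    obtain t where t: "h < t" "t < h + r / norm v" "x + t *\<^sub>R v \<notin> S" using assms(4) rv by blast
    have "dist (x + t *\<^sub>R v) (x + h *\<^sub>R v) = (t - h) * norm v"
      using t(1) by (simp add: dist_norm algebra_simps flip: scaleR_diff_left)
    also have "\<dots> < r" using t(2) nv by (simp add: field_simps)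
    finally have "x + t *\<^sub>R v \<in> ball (x + h *\<^sub>R v) r" by (simp add: dist_commute)
    then show False using r(2) t(3) by blast
  qed
  then show ?thesis using assms(1,3) unfolding frontier_def by (simp add: closure_closed)
qed


definition Wk :: "nat \<Rightarrow> real set" where "Wk K = {r. \<exists>i::int. r = of_int i / real K}"

lemma Wk_add: "x \<in> Wk K \<Longrightarrow> y \<in> Wk K \<Longrightarrow> x + y \<in> Wk K"
proof -
  assume "x \<in> Wk K" "y \<in> Wk K"
  then obtain i j :: int where "x = of_int i / real K" "y = of_int j / real K" unfolding Wk_def by auto
  then have "x + y = of_int (i + j) / real K" by (simp add: add_divide_distrib)
  then show ?thesis unfolding Wk_def by blast
qed

lemma Wl_diff: "x \<in> Wl a m \<Longrightarrow> y \<in> Wl a m \<Longrightarrow> x - y \<in> Wl a m"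
proof -
  assume "x \<in> Wl a m" "y \<in> Wl a m"
  then obtain i j :: int where "x = of_int i / real a ^ m" "y = of_int j / real a ^ m" unfolding Wl_def by auto
  then have "x - y = of_int (i - j) / real a ^ m" by (simp add: diff_divide_distrib)
  then show ?thesis unfolding Wl_def by blast
qed

lemma Wl_lin: "x \<in> Wl a m \<Longrightarrow> y \<in> Wl a m \<Longrightarrow> 2 * x - y \<in> Wl a m"
proof -
  assume "x \<in> Wl a m" "y \<in> Wl a m"
  then obtain i j :: int where "x = of_int i / real a ^ m" "y = of_int j / real a ^ m" unfolding Wl_def by auto
  then have "2 * x - y = of_int (2 * i - j) / real a ^ m" by (simp add: diff_divide_distrib)
  then show ?thesis unfolding Wl_def by blast
qed

lemma Wl_0: "0 \<in> Wl a m" unfolding Wl_def by (auto intro!: exI[of _ 0])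

lemma Wl_1: "a \<ge> 1 \<Longrightarrow> 1 \<in> Wl a m" unfolding Wl_def
  by (intro CollectI exI[of _ "int (a ^ m)"]) simp

lemma Wl_nat_pow: "j < m \<Longrightarrow> a \<ge> 1 \<Longrightarrow> real N / real a ^ Suc j \<in> Wl a m"
proof -
  assume j: "j < m" and a: "a \<ge> 1"
  have e: "real a ^ m = real a ^ Suc j * real a ^ (m - Suc j)"
    using j by (metis Suc_leI le_add_diff_inverse power_add)
  have "real N / real a ^ Suc j = of_int (int (N * a ^ (m - Suc j))) / real a ^ m"
    unfolding e using a by (simp add: field_simps)
  then show ?thesis unfolding Wl_def by blast
qed

lemma Dset_cases:
  assumes "v \<in> Dset \<alpha>"
  obtains "v=(1,\<alpha>)" | "v=(-1,\<alpha>)" | "v=(1,-\<alpha>)" | "v=(-1,-\<alpha>)"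
     | "v=(\<alpha>,1)" | "v=(-\<alpha>,1)" | "v=(\<alpha>,-1)" | "v=(-\<alpha>,-1)"
  using assms unfolding Dset_def by blast

lemma Dset_nz: "v \<in> Dset \<alpha> \<Longrightarrow> v \<noteq> 0"
  by (erule Dset_cases) (auto simp: zero_prod_def)

lemma Dset_out: "x \<in> {0..1} \<times> {0..1} \<Longrightarrow> v \<in> Dset \<alpha> \<Longrightarrow> x + 2 *\<^sub>R v \<notin> {0..1} \<times> {0..1}"
  by (erule Dset_cases; cases x; simp)

lemma reflect_Dset: "v \<in> Dset \<alpha> \<Longrightarrow> reflect_dir S p v \<in> Dset \<alpha>"
  unfolding reflect_dir_def by (erule Dset_cases; simp add: Dset_def)

lemma Dset_v1: "v \<in> Dset \<alpha> \<Longrightarrow> fst v = 0 \<Longrightarrow> \<bar>snd v\<bar> = 1"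
  by (erule Dset_cases; simp)

lemma Dset_v2: "v \<in> Dset \<alpha> \<Longrightarrow> snd v = 0 \<Longrightarrow> \<bar>fst v\<bar> = 1"
  by (erule Dset_cases; simp)

context setting
begin

definition P :: nat where "P = max p 1"
definition K :: nat where "K = q * P * a ^ m"

lemma K_pos: "real K > 0" unfolding K_def P_def using q1 a1 by simp
lemma P_pos: "P > 0" unfolding P_def by simp
lemma q_pos: "q > 0" using q1 by simp

lemma Wl_Wk: assumes "x \<in> Wl a m" shows "x \<in> Wk K"
proof -
  obtain i :: int where i: "x = of_int i / real a ^ m" using assms unfolding Wl_def by auto
  have qP: "real q * real P > 0" unfolding P_def using q1 by simp
  have "x = of_int (i * int q * int P) / real K" unfolding i K_def using P_pos q_pos a1 by (simp add: field_simps)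
  then show ?thesis unfolding Wk_def by blast
qed

lemma rel_aux:
  fixes D1 D2 \<epsilon> :: real
  assumes D1: "D1 \<in> Wl a m" and e: "\<epsilon> = 1 \<or> \<epsilon> = -1"
    and r: "real q * D2 = \<epsilon> * real p * D1 \<or> (real q * D1 = \<epsilon> * real p * D2 \<and> (p = 0 \<longrightarrow> D2 = 0))"
  shows "D2 \<in> Wk K"
proof -
  obtain i :: int where i: "D1 = of_int i / real a ^ m" using D1 unfolding Wl_def by auto
  have am: "real a ^ m > 0" using a1 by simp
  have q0: "real q > 0" using q1 by simp
  from r show ?thesis
  proof
    assume h: "real q * D2 = \<epsilon> * real p * D1"
    have "D2 = \<epsilon> * real p * D1 / real q" using h q0 by (simp add: field_simps)
    also have "\<dots> = of_int (int p * int P * i) * \<epsilon> / real K" unfolding i K_def using q0 am P_pos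
      by (simp add: field_simps)
    finally have "D2 = of_int (int p * int P * i) * \<epsilon> / real K" .
    then have "D2 = of_int (if \<epsilon> = 1 then int p * int P * i else - (int p * int P * i)) / real K"
      using e by auto
    then show ?thesis unfolding Wk_def by blast
  next
    assume h: "real q * D1 = \<epsilon> * real p * D2 \<and> (p = 0 \<longrightarrow> D2 = 0)"
    show ?thesis
    proof (cases "p = 0")
      case True then show ?thesis using h unfolding Wk_def by (auto intro!: exI[of _ 0])
    next
      case False
      then have P: "P = p" unfolding P_def by simp
      have p0: "real p > 0" using False by simp
      have "D2 = \<epsilon> * real q * D1 / real p" using h p0 e by (auto simp: field_simps)
      also have "\<dots> = of_int (int q * int q * i) * \<epsilon> / real K" unfolding i K_def P using q0 am p0
        by (simp add: field_simps)
      finally have "D2 = of_int (int q * int q * i) * \<epsilon> / real K" .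
      then have "D2 = of_int (if \<epsilon> = 1 then int q * int q * i else - (int q * int q * i)) / real K"
        using e by auto
      then show ?thesis unfolding Wk_def by blast
    qed
  qed
qed

end


context setting
begin

lemma pc_lattice: assumes "z \<in> peripheral_corners a m" shows "fst z \<in> Wl a m \<and> snd z \<in> Wl a m"
proof -
  obtain j c where jc: "j < m" "c \<in> cells a j" "z \<in> {rm_lo a j (fst c), rm_lo a j (fst c) + rm_side a j} \<times> {rm_lo a j (snd c), rm_lo a j (snd c) + rm_side a j}"
    using assms unfolding pc_eq by blast
  have w: "rm_lo a j u \<in> Wl a m" "rm_lo a j u + rm_side a j \<in> Wl a m" for u
    unfolding rm_hi[OF a1] unfolding rm_lo_def by (rule Wl_nat_pow[OF jc(1) a1])+
  show ?thesis using jc(3) w by auto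
qed

lemma Qc_lattice: "(z::pt) \<in> {(0,0),(1,1),(1,0),(0,1)} \<Longrightarrow> fst z \<in> Wl a m \<and> snd z \<in> Wl a m"
  using Wl_0 Wl_1[OF a1] by auto

lemma rel_W1: assumes "good x v" "fst x \<in> Wl a m" "fst v \<noteq> 0" shows "snd x \<in> Wk K"
proof -
  obtain g1 g2 T where g: "g1 \<in> Wl a m" "g2 \<in> Wl a m" "x = (g1 + T * fst v, g2 + T * snd v)" and v: "v \<in> Dset \<alpha>"
    using assms(1) unfolding good_def by blast
  have D1: "T * fst v \<in> Wl a m" using Wl_diff[OF assms(2) g(1)] g(3) by simp
  obtain \<epsilon> :: real where e: "\<epsilon> = 1 \<or> \<epsilon> = -1" and
    r: "real q * (T * snd v) = \<epsilon> * real p * (T * fst v) \<or> real q * (T * fst v) = \<epsilon> * real p * (T * snd v)"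
    using dir_rel[OF q1 v, of T] by blast
  have r': "real q * (T * snd v) = \<epsilon> * real p * (T * fst v) \<or>
      (real q * (T * fst v) = \<epsilon> * real p * (T * snd v) \<and> (p = 0 \<longrightarrow> T * snd v = 0))"
  proof (cases "p = 0")
    case True
    show ?thesis
    proof (cases "real q * (T * snd v) = \<epsilon> * real p * (T * fst v)")
      case False
      then have "real q * (T * fst v) = 0" using r True by simp
      then have "T = 0" using assms(3) q1 by simp
      then show ?thesis by simp
    qed simp
  qed (use r in auto)
  have "T * snd v \<in> Wk K" by (rule rel_aux[OF D1 e r'])
  moreover have "g2 \<in> Wk K" by (rule Wl_Wk[OF g(2)])
  ultimately show ?thesis using g(3) Wk_add by (simp add: add.commute)
qed

lemma rel_W2: assumes "good x v" "snd x \<in> Wl a m" "snd v \<noteq> 0" shows "fst x \<in> Wk K"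
proof -
  obtain g1 g2 T where g: "g1 \<in> Wl a m" "g2 \<in> Wl a m" "x = (g1 + T * fst v, g2 + T * snd v)" and v: "v \<in> Dset \<alpha>"
    using assms(1) unfolding good_def by blast
  have D1: "T * snd v \<in> Wl a m" using Wl_diff[OF assms(2) g(2)] g(3) by simp
  obtain \<epsilon> :: real where e: "\<epsilon> = 1 \<or> \<epsilon> = -1" and
    r: "real q * (T * snd v) = \<epsilon> * real p * (T * fst v) \<or> real q * (T * fst v) = \<epsilon> * real p * (T * snd v)"
    using dir_rel[OF q1 v, of T] by blast
  have r': "real q * (T * fst v) = \<epsilon> * real p * (T * snd v) \<or>
      (real q * (T * snd v) = \<epsilon> * real p * (T * fst v) \<and> (p = 0 \<longrightarrow> T * fst v = 0))"
  proof (cases "p = 0")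
    case True
    show ?thesis
    proof (cases "real q * (T * fst v) = \<epsilon> * real p * (T * snd v)")
      case False
      then have "real q * (T * snd v) = 0" using r True by simp
      then have "T = 0" using assms(3) q1 by simp
      then show ?thesis by simp
    qed simp
  qed (use r in auto)
  have "T * fst v \<in> Wk K" by (rule rel_aux[OF D1 e r'])
  moreover have "g1 \<in> Wk K" by (rule Wl_Wk[OF g(1)])
  ultimately show ?thesis using g(3) Wk_add by (simp add: add.commute)
qed

definition Inv :: "pt \<times> pt \<Rightarrow> bool" where
  "Inv s \<longleftrightarrow> good (fst s) (snd s) \<and> fst s \<in> carpet a m \<and> fst (fst s) \<in> Wk K \<and> snd (fst s) \<in> Wk K"

end


context setting
begin

lemma Inv_step: assumes I: "Inv (x, v)" shows "Inv (step m (x, v))"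
proof (cases "x \<in> peripheral_corners a m")
  case True
  then show ?thesis using I unfolding step_def by simp
next
  case False
  let ?S = "carpet a m" and ?C = "peripheral_corners a m"
  have gx: "good x v" and xS: "x \<in> ?S" using I unfolding Inv_def by auto
  have vD: "v \<in> Dset \<alpha>" using gx unfolding good_def by blast
  define h where "h = hit_time ?S ?C x v"
  define pp where "pp = x + h *\<^sub>R v"
  define v' where "v' = reflect_dir ?S pp v"
  have st: "step m (x, v) = (pp, v')" unfolding step_def v'_def pp_def h_def using False by (simp add: Let_def)
  have Sc: "closed ?S" by (rule carpet_closed[OF a1])
  have v0: "v \<noteq> 0" by (rule Dset_nz[OF vD])
  have out: "x + 2 *\<^sub>R v \<notin> ?S" using Dset_out[OF _ vD, of x] carpet_Q[OF a1, of m] xS by blast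
  note H = hit[OF Sc xS pc_finite[of m] v0 out, folded h_def, folded pp_def]
  have ppS: "pp \<in> ?S" using H(2) .
  have gp: "good pp v" unfolding pp_def by (rule good_move[OF gx])
  obtain g1 g2 T where g: "g1 \<in> Wl a m" "g2 \<in> Wl a m" "pp = (g1 + T * fst v, g2 + T * snd v)"
    using gp unfolding good_def by blast
  have v'D: "v' \<in> Dset \<alpha>" unfolding v'_def by (rule reflect_Dset[OF vD])
  show ?thesis
  proof (cases "fst pp \<in> Wl a m \<and> snd pp \<in> Wl a m")
    case True
    have "good pp v'" unfolding good_def using True v'D
      by (intro conjI v'D bexI[of _ "fst pp"] bexI[of _ "snd pp"] exI[of _ 0]) auto
    then show ?thesis unfolding st Inv_def using ppS Wl_Wk True by auto
  next
    case nl: False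
    have ppC: "pp \<notin> ?C" using pc_lattice nl by blast
    then have acc: "\<forall>e>0. \<exists>t. h < t \<and> t < h + e \<and> x + t *\<^sub>R v \<notin> ?S" using H(3) unfolding pp_def by blast
    have fr: "pp \<in> frontier ?S" unfolding pp_def by (rule hit_frontier[OF Sc v0 H(2)[unfolded pp_def] acc])
    have nQ: "pp \<notin> {(0,0),(1,1),(1,0),(0,1)}" using Qc_lattice nl by blast
    have v'eq: "v' = (if vertical_wall ?S pp then (- fst v, snd v) else (fst v, - snd v))"
      unfolding v'_def reflect_dir_def using nQ by auto
    have along: "x + t *\<^sub>R v = pp + (t - h) *\<^sub>R v" for t unfolding pp_def by (simp add: algebra_simps)
    have frS: "frontier ?S \<subseteq> ?S" using Sc by (simp add: frontier_subset_closed)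
    from FW[OF a1 fr] nl consider "fst pp \<in> Wl a m" "snd pp \<notin> Wl a m" | "snd pp \<in> Wl a m" "fst pp \<notin> Wl a m" by blast
    then show ?thesis
    proof cases
      case 1
      obtain e where e: "e > 0" "\<forall>s. \<bar>s\<bar> < e \<longrightarrow> (fst pp, snd pp + s) \<in> frontier ?S"
        using V_wall[OF a1 fr 1(2)] by blast
      have vw: "vertical_wall ?S pp" by (rule vwall_of_seg[OF e])
      have v1: "fst v \<noteq> 0"
      proof
        assume f0: "fst v = 0"
        then have s1: "\<bar>snd v\<bar> = 1" by (rule Dset_v1[OF vD])
        obtain t where t: "h < t" "t < h + e" "x + t *\<^sub>R v \<notin> ?S" using acc e(1) by blast
        have "x + t *\<^sub>R v = (fst pp, snd pp + (t - h) * snd v)" unfolding along using f0 by (cases pp, cases v) simp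
        moreover have "\<bar>(t - h) * snd v\<bar> < e" using t s1 by (simp add: abs_mult)
        ultimately show False using e(2) frS t(3) by auto
      qed
      have Ws: "snd pp \<in> Wk K" by (rule rel_W1[OF gp 1(1) v1])
      have "good pp v'"
      proof -
        have "pp = ((2 * fst pp - g1) + T * fst v', g2 + T * snd v')" using g(3) vw unfolding v'eq by simp
        then show ?thesis unfolding good_def using v'D Wl_lin[OF 1(1) g(1)] g(2) by blast
      qed
      then show ?thesis unfolding st Inv_def using ppS Ws Wl_Wk[OF 1(1)] by auto
    next
      case 2
      obtain e where e: "e > 0" "\<forall>s. \<bar>s\<bar> < e \<longrightarrow> (fst pp + s, snd pp) \<in> frontier ?S"
        using H_wall[OF a1 fr 2(2)] by blast
      have vw: "\<not> vertical_wall ?S pp" using vwall_Wl[OF a1] 2(2) by blast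
      have v2: "snd v \<noteq> 0"
      proof
        assume f0: "snd v = 0"
        then have s1: "\<bar>fst v\<bar> = 1" by (rule Dset_v2[OF vD])
        obtain t where t: "h < t" "t < h + e" "x + t *\<^sub>R v \<notin> ?S" using acc e(1) by blast
        have "x + t *\<^sub>R v = (fst pp + (t - h) * fst v, snd pp)" unfolding along using f0 by (cases pp, cases v) simp
        moreover have "\<bar>(t - h) * fst v\<bar> < e" using t s1 by (simp add: abs_mult)
        ultimately show False using e(2) frS t(3) by auto
      qed
      have Ws: "fst pp \<in> Wk K" by (rule rel_W2[OF gp 2(1) v2])
      have "good pp v'"
      proof -
        have "pp = (g1 + T * fst v', (2 * snd pp - g2) + T * snd v')" using g(3) vw unfolding v'eq by simp
        then show ?thesis unfolding good_def using v'D Wl_lin[OF 2(1) g(2)] g(1) by blast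
      qed
      then show ?thesis unfolding st Inv_def using ppS Ws Wl_Wk[OF 2(1)] by auto
    qed
  qed
qed

end


lemma Wk_fin: assumes "real K > 0" shows "finite (Wk K \<inter> {0..1})"
proof -
  have "Wk K \<inter> {0..1} \<subseteq> (\<lambda>i. of_int i / real K) ` {0..int K}"
  proof
    fix x assume x: "x \<in> Wk K \<inter> {0..1}"
    then obtain i :: int where i: "x = of_int i / real K" unfolding Wk_def by auto
    have "0 \<le> of_int i / real K" "of_int i / real K \<le> 1" using x i by auto
    then have "0 \<le> (of_int i :: real)" "of_int i \<le> real K" using assms by (simp_all add: field_simps)
    then have "i \<in> {0..int K}" by simp
    then show "x \<in> (\<lambda>i. of_int i / real K) ` {0..int K}" using i by blast
  qed
  then show ?thesis by (rule finite_subset) simp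
qed

lemma rm_lo_pos: assumes "odd a" "3 \<le> a" shows "rm_lo a j u > 0"
proof -
  have "mid a \<ge> 1" using mid_eq[OF assms] by simp
  then have "a * u + mid a > 0" by simp
  then have "real (a * u + mid a) > 0" by (simp only: of_nat_0_less_iff)
  moreover have "real a ^ Suc j > 0" using assms by simp
  ultimately show ?thesis unfolding rm_lo_def by (rule divide_pos_pos)
qed

lemma bottom_in_carpet:
  assumes "odd a" "3 \<le> a" "0 \<le> x" "x \<le> 1"
  shows "(x, 0) \<in> carpet a n"
proof -
  have "(x, 0) \<in> carpet a 0" unfolding carpet0 using assms by simp
  moreover have "\<forall>j c. 0 \<le> j \<and> j < n \<and> c \<in> cells a j \<longrightarrow> (x, 0) \<notin> cmid a j c"
    unfolding cmid_def using rm_lo_pos[OF assms(1,2)] by (auto simp: not_le)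
  ultimately show ?thesis using carpet_up[OF assms(1,2)] by blast
qed

lemma bottom_frontier:
  assumes "odd a" "3 \<le> a" "0 \<le> x" "x \<le> 1"
  shows "(x, 0) \<in> frontier (carpet a n)"
proof -
  have a1: "a \<ge> 1" using assms by simp
  have "interior (carpet a n) \<subseteq> interior ({0..1} \<times> {0..1})" by (rule interior_mono[OF carpet_Q[OF a1]])
  also have "\<dots> = {0<..<1} \<times> {0<..<1}" by (simp add: interior_Times)
  finally have "(x, 0) \<notin> interior (carpet a n)" by auto
  moreover have "(x, 0) \<in> closure (carpet a n)" using bottom_in_carpet[OF assms] closure_subset by blast
  ultimately show ?thesis unfolding frontier_def by blast
qed

context setting
begin

lemma main:
  fixes k :: nat
  assumes k: "1 \<le> k" "k \<le> a ^ m - 1"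
  defines "x0 \<equiv> (real k / real a ^ m, 0::real)"
  shows "compatible_closed_seq a m (\<lambda>n. x0) \<alpha> \<and> constant_orbit_seq a m (\<lambda>n. x0) \<alpha>"
proof -
  have am: "real a ^ m > 0" using a1 by simp
  have "k < a ^ m" using k by simp
  then have "real k < real a ^ m" by (metis of_nat_less_iff of_nat_power)
  then have x01: "0 \<le> real k / real a ^ m" "real k / real a ^ m \<le> 1" using am by (simp_all add: field_simps)
  have x0W: "real k / real a ^ m \<in> Wl a m" unfolding Wl_def by (intro CollectI exI[of _ "int k"]) simp
  have dD: "dir \<alpha> \<in> Dset \<alpha>" unfolding dir_def Dset_def by simp
  have g0: "good x0 (dir \<alpha>)" unfolding good_def x0_def using dD x0W Wl_0
    by (intro conjI bexI[of _ "real k / real a ^ m"] bexI[of _ 0] exI[of _ 0]) auto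
  have I0: "Inv (x0, dir \<alpha>)" unfolding Inv_def using g0 bottom_in_carpet[OF odd_a a3 x01] x0W Wl_0 Wl_Wk
    unfolding x0_def by auto
  have eqI: "orbit_seq a n x0 (dir \<alpha>) j = orbit_seq a m x0 (dir \<alpha>) j \<and> Inv (orbit_seq a m x0 (dir \<alpha>) j)"
    if "m \<le> n" for n j
  proof (induction j)
    case 0 then show ?case using I0 by simp
  next
    case (Suc j)
    obtain x v where xv: "orbit_seq a m x0 (dir \<alpha>) j = (x, v)" by (rule prod.exhaust)
    have Ij: "Inv (x, v)" and eqj: "orbit_seq a n x0 (dir \<alpha>) j = (x, v)" using Suc xv by auto
    have gx: "good x v" using Ij unfolding Inv_def by simp
    show ?case unfolding orbit_step eqj xv using step_eq[OF gx that] Inv_step[OF Ij] by simp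
  qed
  have fin: "finite (range (orbit_seq a m x0 (dir \<alpha>)))"
  proof -
    have "range (orbit_seq a m x0 (dir \<alpha>)) \<subseteq> ((Wk K \<inter> {0..1}) \<times> (Wk K \<inter> {0..1})) \<times> Dset \<alpha>"
    proof
      fix s assume "s \<in> range (orbit_seq a m x0 (dir \<alpha>))"
      then have Is: "Inv s" using eqI[of m] by auto
      then have "fst s \<in> {0..1} \<times> {0..1}" using carpet_Q[OF a1, of m] unfolding Inv_def by blast
      moreover have "snd s \<in> Dset \<alpha>" using Is unfolding Inv_def good_def by blast
      moreover have "fst (fst s) \<in> Wk K" "snd (fst s) \<in> Wk K" using Is unfolding Inv_def by blast+
      ultimately show "s \<in> ((Wk K \<inter> {0..1}) \<times> (Wk K \<inter> {0..1})) \<times> Dset \<alpha>"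
        by (simp add: mem_Times_iff)
    qed
    moreover have "finite (((Wk K \<inter> {0..1}) \<times> (Wk K \<inter> {0..1})) \<times> Dset \<alpha>)"
      using Wk_fin[OF K_pos] Dset_finite by simp
    ultimately show ?thesis by (rule finite_subset)
  qed
  have rng: "orbit_seq a n x0 (dir \<alpha>) = orbit_seq a m x0 (dir \<alpha>)" if "m \<le> n" for n
    by (rule ext) (use eqI[OF that] in blast)
  have closed: "closed_orbit a n x0 \<alpha>" if "m \<le> n" for n
    unfolding closed_orbit_def orbit_def rng[OF that] using fin .
  have path: "orbit_path a n x0 \<alpha> = orbit_path a m x0 \<alpha>" if "m \<le> n" for n
    unfolding orbit_path_def rng[OF that] ..
  have comp: "compatible a n x0 x0 \<alpha>" for n
  proof -
    have fr: "x0 \<in> frontier (carpet a n)" unfolding x0_def by (rule bottom_frontier[OF odd_a a3 x01])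
    show ?thesis unfolding compatible_def
      by (rule exI[of _ x0], rule exI[of _ x0], rule exI[of _ 0]) (use fr in simp)
  qed
  have c1: "\<forall>n n'. m \<le> n' \<and> n' < n \<longrightarrow> compatible a n x0 x0 \<alpha>" using comp by blast
  have c2: "\<forall>n\<ge>m. closed_orbit a n x0 \<alpha>" using closed by blast
  have c3: "\<forall>n\<ge>m. orbit_path a (Suc n) x0 \<alpha> = orbit_path a n x0 \<alpha>"
  proof (intro allI impI)
    fix n assume "m \<le> n"
    then show "orbit_path a (Suc n) x0 \<alpha> = orbit_path a n x0 \<alpha>" using path[of n] path[of "Suc n"] by simp
  qed
  show ?thesis unfolding compatible_closed_seq_def constant_orbit_seq_def using c1 c2 c3 by blast
qed

end


lemma main_global:
  fixes a m p q k :: nat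
  assumes "odd a" "3 \<le> a" "q \<ge> 1" "p + q + 2 \<le> a" "odd (p+q)" "1 \<le> k" "k \<le> a ^ m - 1"
  shows "compatible_closed_seq a m (\<lambda>n. (real k / real a ^ m, 0)) (real p / real q) \<and>
         constant_orbit_seq a m (\<lambda>n. (real k / real a ^ m, 0)) (real p / real q)"
proof -
  interpret setting a m p q using assms(1-5) by unfold_locales auto
  show ?thesis using main[OF assms(6,7)] by simp
qed

theorem proposition4p3:
  fixes a m k :: nat and \<alpha> :: real
  assumes "odd a" and "3 \<le> a" and "\<alpha> \<in> A_set (a - 2)"
    and "1 \<le> k" and "k \<le> a ^ m - 1"
  shows "\<exists>N. compatible_closed_seq a N (\<lambda>n. (real k / real a ^ m, 0)) \<alpha> \<and>
             constant_orbit_seq a N (\<lambda>n. (real k / real a ^ m, 0)) \<alpha>"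
proof -
  obtain p q :: nat where pq: "\<alpha> = real p / real q" "q \<ge> 1" "p + q + 2 \<le> a" "odd (p+q)"
  proof (cases "a - 2 = 1")
    case True
    then have "\<alpha> = 0" using assms(3) unfolding A_set_def by simp
    then show ?thesis using that[of 0 1] True by simp
  next
    case False
    then obtain p q where h: "\<alpha> = real p / real q" "p + q \<le> a - 2" "p < q" "odd (p+q)"
      using assms(3) unfolding A_set_def by auto
    then show ?thesis using that[of p q] assms(2) by simp
  qed
  have "compatible_closed_seq a m (\<lambda>n. (real k / real a ^ m, 0)) (real p / real q) \<and>
         constant_orbit_seq a m (\<lambda>n. (real k / real a ^ m, 0)) (real p / real q)"
    by (rule main_global[OF assms(1,2) pq(2,3,4) assms(4,5)])
  then show ?thesis unfolding pq(1) by blast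
qed

end
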